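(* A biconnected graph $G$ is 2.5-connected if and only if no cycle among the triconnected components of $G$ contains a non-virtual edge.
   Context: Graphs are finite, may have parallel edges, no loops; $G$ itself has no virtual edges. Biconnected: connected and for all pairwise distinct $u,v,w$ there is a $u$-$v$ path avoiding $w$. $G$ is 2.5-connected if it is biconnected and there is no $(c,e)\in V(G)\times E(G)$ such that $G-e-c$ is disconnected (when $G$ is not a triangle). Splits: for biconnected $H$ and $u,v\in V(H)$, edges are in the same separation class iff they lie on a common (possibly closed) path with neither $u$ nor $v$ internal; $\{u,v\}$ is a separation pair if some union $E'$ of some but not all classes has $\min\{|E'|,|E(H)\setminus E'|\}\ge2$; a split replaces $H$ by $H[E']+e_1$ and $H[E(H)\setminus E']+e_2$ with new edges $e_1,e_2$ joining $u,v$; these new edges are virtual and correspond to each other; all other edges stem from $G$ and are non-virtual. Triconnected: biconnected without separation pair. Splitting until impossible gives triangles, 3-edges (two vertices, three parallel edges) and other triconnected graphs; merging (gluing at corresponding virtual edges and deleting them) the triangles as much as possible into cycles and the 3-edges as much as possible into multiedges yields the triconnected components of $G$. *)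

theory Defs
  imports Main
begin

record ('v, 'e) mgraph =
  verts :: "'v set"
  edges :: "'e set"
  ends  :: "'e \<Rightarrow> 'v set"

definition wf_graph :: "('v, 'e) mgraph \<Rightarrow> bool" where
  "wf_graph G \<longleftrightarrow> finite (verts G) \<and> finite (edges G) \<and>
     (\<forall>e\<in>edges G. ends G e \<subseteq> verts G \<and> card (ends G e) = 2)"

definition is_walk :: "('v, 'e) mgraph \<Rightarrow> 'v list \<Rightarrow> 'e list \<Rightarrow> bool" where
  "is_walk G vs es \<longleftrightarrow> length vs = Suc (length es) \<and> set vs \<subseteq> verts G \<and> set es \<subseteq> edges G \<and>
     (\<forall>i<length es. ends G (es ! i) = {vs ! i, vs ! Suc i})"

definition open_path :: "('v, 'e) mgraph \<Rightarrow> 'v list \<Rightarrow> 'e list \<Rightarrow> bool" where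
  "open_path G vs es \<longleftrightarrow> is_walk G vs es \<and> distinct vs"

definition closed_path :: "('v, 'e) mgraph \<Rightarrow> 'v list \<Rightarrow> 'e list \<Rightarrow> bool" where
  "closed_path G vs es \<longleftrightarrow> is_walk G vs es \<and> length es \<ge> 2 \<and> hd vs = last vs \<and>
     distinct (tl vs) \<and> distinct es"

definition internal_verts :: "'v list \<Rightarrow> 'v set" where
  "internal_verts vs = set (butlast (tl vs))"

definition connected_graph :: "('v, 'e) mgraph \<Rightarrow> bool" where
  "connected_graph G \<longleftrightarrow>
     (\<forall>x\<in>verts G. \<forall>y\<in>verts G. \<exists>vs es. open_path G vs es \<and> hd vs = x \<and> last vs = y)"

definition biconnected :: "('v, 'e) mgraph \<Rightarrow> bool" where
  "biconnected G \<longleftrightarrow> connected_graph G \<and>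
     (\<forall>u\<in>verts G. \<forall>v\<in>verts G. \<forall>w\<in>verts G. u \<noteq> v \<and> u \<noteq> w \<and> v \<noteq> w \<longrightarrow>
        (\<exists>vs es. open_path G vs es \<and> hd vs = u \<and> last vs = v \<and> w \<notin> set vs))"

definition del_edge_vert :: "('v, 'e) mgraph \<Rightarrow> 'e \<Rightarrow> 'v \<Rightarrow> ('v, 'e) mgraph" where
  "del_edge_vert G e c =
     \<lparr>verts = verts G - {c}, edges = {f \<in> edges G - {e}. c \<notin> ends G f}, ends = ends G\<rparr>"

definition is_cycle :: "('v, 'e) mgraph \<Rightarrow> bool" where
  "is_cycle G \<longleftrightarrow> (\<exists>vs es. closed_path G vs es \<and> set vs = verts G \<and> set es = edges G \<and>
     length es \<ge> 3)"

definition is_triangle :: "('v, 'e) mgraph \<Rightarrow> bool" where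
  "is_triangle G \<longleftrightarrow> is_cycle G \<and> card (edges G) = 3"

definition is_multiedge :: "('v, 'e) mgraph \<Rightarrow> bool" where
  "is_multiedge G \<longleftrightarrow> card (verts G) = 2 \<and> card (edges G) \<ge> 3 \<and>
     (\<forall>e\<in>edges G. ends G e = verts G)"

definition two_half_connected :: "('v, 'e) mgraph \<Rightarrow> bool" where
  "two_half_connected G \<longleftrightarrow> biconnected G \<and>
     (\<not> is_triangle G \<longrightarrow>
        \<not> (\<exists>c\<in>verts G. \<exists>e\<in>edges G. \<not> connected_graph (del_edge_vert G e c)))"

definition same_sep_class :: "('v, 'e) mgraph \<Rightarrow> 'v \<Rightarrow> 'v \<Rightarrow> 'e \<Rightarrow> 'e \<Rightarrow> bool" where
  "same_sep_class H u v e f \<longleftrightarrow>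
     (\<exists>vs es. (open_path H vs es \<or> closed_path H vs es) \<and> e \<in> set es \<and> f \<in> set es \<and>
        u \<notin> internal_verts vs \<and> v \<notin> internal_verts vs)"

definition sep_split_set :: "('v, 'e) mgraph \<Rightarrow> 'v \<Rightarrow> 'v \<Rightarrow> 'e set \<Rightarrow> bool" where
  "sep_split_set H u v F \<longleftrightarrow> u \<in> verts H \<and> v \<in> verts H \<and> u \<noteq> v \<and> F \<subseteq> edges H \<and>
     (\<forall>e\<in>F. \<forall>f\<in>edges H. same_sep_class H u v e f \<longrightarrow> f \<in> F) \<and>
     card F \<ge> 2 \<and> card (edges H - F) \<ge> 2"

definition has_sep_pair :: "('v, 'e) mgraph \<Rightarrow> bool" where
  "has_sep_pair H \<longleftrightarrow> (\<exists>u v F. sep_split_set H u v F)"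

definition triconnected :: "('v, 'e) mgraph \<Rightarrow> bool" where
  "triconnected H \<longleftrightarrow> biconnected H \<and> \<not> has_sep_pair H"

text \<open>Graphs occurring in the decomposition have edges of type 'e + nat:
  Inl e is the non-virtual edge e of G, Inr n is a virtual edge. The two corresponding
  virtual edges created by one split carry the same (fresh) label Inr n.\<close>

definition embed_graph :: "('v, 'e) mgraph \<Rightarrow> ('v, 'e + nat) mgraph" where
  "embed_graph G = \<lparr>verts = verts G, edges = Inl ` edges G,
     ends = case_sum (ends G) (\<lambda>_. {})\<rparr>"

definition split_piece ::
  "('v, 'e + nat) mgraph \<Rightarrow> 'v \<Rightarrow> 'v \<Rightarrow> ('e + nat) set \<Rightarrow> nat \<Rightarrow> ('v, 'e + nat) mgraph" where
  "split_piece H u v F n = \<lparr>verts = (\<Union>e\<in>F. ends H e) \<union> {u, v}, edges = F \<union> {Inr n},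
     ends = (ends H)(Inr n := {u, v})\<rparr>"

definition split_step :: "('v, 'e + nat) mgraph set \<Rightarrow> ('v, 'e + nat) mgraph set \<Rightarrow> bool" where
  "split_step D D' \<longleftrightarrow> (\<exists>H\<in>D. \<exists>u v F n. biconnected H \<and> sep_split_set H u v F \<and>
     (\<forall>H'\<in>D. Inr n \<notin> edges H') \<and>
     D' = (D - {H}) \<union> {split_piece H u v F n, split_piece H u v (edges H - F) n})"

definition merge_graphs ::
  "('v, 'e + nat) mgraph \<Rightarrow> ('v, 'e + nat) mgraph \<Rightarrow> nat \<Rightarrow> ('v, 'e + nat) mgraph" where
  "merge_graphs H1 H2 n = \<lparr>verts = verts H1 \<union> verts H2,
     edges = (edges H1 \<union> edges H2) - {Inr n},
     ends = (\<lambda>e. if e \<in> edges H1 then ends H1 e else ends H2 e)\<rparr>"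

definition mergeable :: "('v, 'e + nat) mgraph \<Rightarrow> ('v, 'e + nat) mgraph \<Rightarrow> nat \<Rightarrow> bool" where
  "mergeable H1 H2 n \<longleftrightarrow> H1 \<noteq> H2 \<and> Inr n \<in> edges H1 \<and> Inr n \<in> edges H2 \<and>
     ((is_cycle H1 \<and> is_cycle H2) \<or> (is_multiedge H1 \<and> is_multiedge H2))"

definition merge_step :: "('v, 'e + nat) mgraph set \<Rightarrow> ('v, 'e + nat) mgraph set \<Rightarrow> bool" where
  "merge_step D D' \<longleftrightarrow> (\<exists>H1\<in>D. \<exists>H2\<in>D. \<exists>n. mergeable H1 H2 n \<and>
     D' = (D - {H1, H2}) \<union> {merge_graphs H1 H2 n})"

definition triconnected_components :: "('v, 'e) mgraph \<Rightarrow> ('v, 'e + nat) mgraph set \<Rightarrow> bool" where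
  "triconnected_components G C \<longleftrightarrow>
     (\<exists>D. split_step\<^sup>*\<^sup>* {embed_graph G} D \<and>
          (\<forall>H\<in>D. \<not> (biconnected H \<and> has_sep_pair H)) \<and>
          merge_step\<^sup>*\<^sup>* D C \<and>
          \<not> (\<exists>H1\<in>C. \<exists>H2\<in>C. \<exists>n. mergeable H1 H2 n))"

end

theory Submission
  imports Defs
begin

inductive reach :: "('v, 'e) mgraph \<Rightarrow> 'e set \<Rightarrow> 'v set \<Rightarrow> 'v \<Rightarrow> 'v \<Rightarrow> bool"
  for H E A where
  rrefl: "a \<in> A \<Longrightarrow> a \<in> verts H \<Longrightarrow> reach H E A a a"
| rstep: "reach H E A a b \<Longrightarrow> f \<in> E \<Longrightarrow> f \<in> edges H \<Longrightarrow> ends H f = {b, c} \<Longrightarrow>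
     c \<in> A \<Longrightarrow> c \<in> verts H \<Longrightarrow> reach H E A a c"

lemma reach_in: "reach H E A a b \<Longrightarrow> a \<in> A \<and> a \<in> verts H \<and> b \<in> A \<and> b \<in> verts H"
  by (induction rule: reach.induct) auto

lemma reach_trans: "reach H E A b c \<Longrightarrow> reach H E A a b \<Longrightarrow> reach H E A a c"
  by (induction rule: reach.induct) (auto intro: rstep)

lemma reach_edge: "f \<in> E \<Longrightarrow> f \<in> edges H \<Longrightarrow> ends H f = {b, c} \<Longrightarrow> b \<in> A \<Longrightarrow> b \<in> verts H \<Longrightarrow>
   c \<in> A \<Longrightarrow> c \<in> verts H \<Longrightarrow> reach H E A b c"
  by (rule rstep[OF rrefl]) auto

lemma reach_sym: "reach H E A a b \<Longrightarrow> reach H E A b a"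
proof (induction rule: reach.induct)
  case (rrefl a) then show ?case by (auto intro: reach.rrefl)
next
  case (rstep a b f c)
  have "reach H E A c b" using rstep reach_in[OF rstep.hyps(1)]
    by (intro reach_edge[of f]) (auto simp: insert_commute)
  then show ?case using rstep.IH reach_trans by metis
qed

lemma reach_transfer:
  assumes "reach H E A a b"
    and "\<And>f x y. f \<in> E \<Longrightarrow> f \<in> edges H \<Longrightarrow> ends H f = {x, y} \<Longrightarrow> x \<in> A \<Longrightarrow> y \<in> A \<Longrightarrow>
       x \<in> verts H \<Longrightarrow> y \<in> verts H \<Longrightarrow> f \<in> E' \<and> f \<in> edges H' \<and> ends H' f = {x, y}"
    and "\<And>x. x \<in> A \<Longrightarrow> x \<in> verts H \<Longrightarrow> x \<in> A' \<and> x \<in> verts H'"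
  shows "reach H' E' A' a b"
  using assms(1)
proof (induction rule: reach.induct)
  case (rrefl a) then show ?case using assms(3) by (auto intro: reach.rrefl)
next
  case (rstep a b f c)
  note bi = reach_in[OF rstep.hyps(1)]
  from assms(2)[OF rstep.hyps(2,3,4)] bi rstep.hyps(5,6) assms(3)[of c]
  show ?case by (auto intro: reach.rstep[OF rstep.IH])
qed

lemma reach_mono: "reach H E A a b \<Longrightarrow> E \<inter> edges H \<subseteq> E' \<Longrightarrow> A \<inter> verts H \<subseteq> A' \<Longrightarrow> reach H E' A' a b"
  by (erule reach_transfer) auto

lemma reach_first_step:
  "reach H E A a b \<Longrightarrow> a = b \<or> (\<exists>f z. f \<in> E \<and> f \<in> edges H \<and> ends H f = {a, z} \<and> z \<in> A \<and> z \<in> verts H)"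
proof (induction rule: reach.induct)
  case (rrefl a) then show ?case by simp
next
  case (rstep a b f c)
  from rstep.IH show ?case
  proof
    assume "a = b"
    then show ?thesis using rstep.hyps(2-6) by (intro disjI2 exI[of _ f] exI[of _ c]) simp
  qed simp
qed

lemma reach_closed:
  assumes "reach H E A a b" "a \<in> S"
    and "\<And>x f y. x \<in> S \<Longrightarrow> f \<in> E \<Longrightarrow> f \<in> edges H \<Longrightarrow> ends H f = {x, y} \<Longrightarrow> y \<in> A \<Longrightarrow> y \<in> verts H \<Longrightarrow> y \<in> S"
  shows "b \<in> S"
  using assms(1,2)
proof (induction rule: reach.induct)
  case (rrefl a) then show ?case by simp
next
  case (rstep a b f c) then show ?case using assms(3)[of b f c] by simp
qed

lemma reach_exit:
  assumes "reach H E A a b" "a \<in> S"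
  shows "reach H E (A \<inter> S) a b \<or> (\<exists>z f c. reach H E (A \<inter> S) a z \<and> f \<in> E \<and> f \<in> edges H \<and> ends H f = {z, c} \<and> c \<in> A \<and> c \<in> verts H \<and> c \<notin> S)"
  using assms
proof (induction rule: reach.induct)
  case (rrefl a) then show ?case by (intro disjI1 reach.rrefl) auto
next
  case (rstep a b f c)
  show ?case
  proof (cases "c \<in> S")
    case True
    from rstep.IH[OF rstep.prems] show ?thesis
    proof
      assume "reach H E (A \<inter> S) a b"
      then have "reach H E (A \<inter> S) a c" by (rule reach.rstep[where f=f]) (use rstep.hyps True in simp_all)
      then show ?thesis by simp
    qed (rule disjI2, assumption)
  next
    case False
    from rstep.IH[OF rstep.prems] show ?thesis
    proof
      assume "reach H E (A \<inter> S) a b"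
      then show ?thesis using rstep.hyps False by (intro disjI2 exI[of _ b] exI[of _ f] exI[of _ c]) simp
    qed (rule disjI2, assumption)
  qed
qed

lemma walk_reach_nth:
  assumes "is_walk H vs es" "set es \<subseteq> E" "set vs \<subseteq> A"
  shows "i \<le> length es \<Longrightarrow> reach H E A (vs ! 0) (vs ! i)"
proof (induction i)
  case 0
  have "vs ! 0 \<in> set vs" using assms(1) by (auto simp: is_walk_def)
  then show ?case using assms by (intro rrefl) (auto simp: is_walk_def)
next
  case (Suc i)
  then have i: "i < length es" by simp
  have m: "vs ! Suc i \<in> set vs" "es ! i \<in> set es" using assms(1) i by (auto simp: is_walk_def)
  show ?case
    by (rule rstep[OF Suc.IH[OF Suc_leD[OF Suc.prems]], where f="es ! i"])
       (use assms i m in \<open>auto simp: is_walk_def\<close>)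
qed

lemma walk_reach:
  assumes "is_walk H vs es" "set es \<subseteq> E" "set vs \<subseteq> A"
  shows "reach H E A (hd vs) (last vs)"
proof -
  have ne: "vs \<noteq> []" using assms(1) by (auto simp: is_walk_def)
  have "reach H E A (vs ! 0) (vs ! length es)" using walk_reach_nth[OF assms] by simp
  moreover have "vs ! 0 = hd vs" using ne by (simp add: hd_conv_nth)
  moreover have "vs ! length es = last vs" using ne assms(1) by (simp add: last_conv_nth is_walk_def)
  ultimately show ?thesis by simp
qed

lemma walk_take:
  assumes "is_walk H vs es" "j \<le> length es"
  shows "is_walk H (take (Suc j) vs) (take j es)"
  using assms unfolding is_walk_def
  by (auto dest: in_set_takeD)

lemma walk_snoc:
  assumes "is_walk H vs es" "f \<in> edges H" "ends H f = {last vs, c}" "c \<in> verts H"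
  shows "is_walk H (vs @ [c]) (es @ [f])"
proof -
  have ne: "vs \<noteq> []" and l: "length vs = Suc (length es)" using assms(1) by (auto simp: is_walk_def)
  have lv: "last vs = vs ! length es" using ne l by (simp add: last_conv_nth)
  show ?thesis unfolding is_walk_def
  proof (intro conjI allI impI)
    fix i assume i: "i < length (es @ [f])"
    show "ends H ((es @ [f]) ! i) = {(vs @ [c]) ! i, (vs @ [c]) ! Suc i}"
    proof (cases "i < length es")
      case True then show ?thesis using assms(1) l by (auto simp: is_walk_def nth_append)
    next
      case False then have "i = length es" using i by simp
      then show ?thesis using assms(3) lv l by (simp add: nth_append)
    qed
  qed (use assms in \<open>auto simp: is_walk_def\<close>)
qed

lemma reach_path:
  assumes "reach H E A a b"
  shows "\<exists>vs es. open_path H vs es \<and> hd vs = a \<and> last vs = b \<and> set vs \<subseteq> A \<and> set es \<subseteq> E"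
  using assms
proof (induction rule: reach.induct)
  case (rrefl a)
  then show ?case by (intro exI[of _ "[a]"] exI[of _ "[]"]) (auto simp: open_path_def is_walk_def)
next
  case (rstep a b f c)
  then obtain vs es where p: "open_path H vs es" "hd vs = a" "last vs = b" "set vs \<subseteq> A" "set es \<subseteq> E"
    by blast
  have w: "is_walk H vs es" and d: "distinct vs" using p(1) by (auto simp: open_path_def)
  have ne: "vs \<noteq> []" and l: "length vs = Suc (length es)" using w by (auto simp: is_walk_def)
  show ?case
  proof (cases "c \<in> set vs")
    case True
    then obtain j where j: "j < length vs" "vs ! j = c" by (auto simp: in_set_conv_nth)
    have w': "is_walk H (take (Suc j) vs) (take j es)" using walk_take[OF w, of j] j l by simp
    have "last (take (Suc j) vs) = c" using j by (subst last_conv_nth) (auto simp: min_def intro: arg_cong[where f="(!) vs"])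
    moreover have "hd (take (Suc j) vs) = a" using p(2) ne by simp
    moreover have "distinct (take (Suc j) vs)" using d by simp
    ultimately show ?thesis using w' p(4,5)
      by (intro exI[of _ "take (Suc j) vs"] exI[of _ "take j es"])
         (auto simp: open_path_def dest: in_set_takeD)
  next
    case False
    have w': "is_walk H (vs @ [c]) (es @ [f])" using walk_snoc[OF w rstep.hyps(3)] rstep.hyps p(3) by simp
    show ?thesis using w' d False p ne rstep.hyps
      by (intro exI[of _ "vs @ [c]"] exI[of _ "es @ [f]"]) (auto simp: open_path_def)
  qed
qed

lemma path_reach:
  "open_path H vs es \<Longrightarrow> set vs \<subseteq> A \<Longrightarrow> set es \<subseteq> E \<Longrightarrow> reach H E A (hd vs) (last vs)"
  unfolding open_path_def using walk_reach by blast

lemma connected_reach: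
  "connected_graph H \<longleftrightarrow> (\<forall>x\<in>verts H. \<forall>y\<in>verts H. reach H (edges H) (verts H) x y)"
proof
  assume c: "connected_graph H"
  show "\<forall>x\<in>verts H. \<forall>y\<in>verts H. reach H (edges H) (verts H) x y"
  proof (intro ballI)
    fix x y assume "x \<in> verts H" "y \<in> verts H"
    then obtain vs es where "open_path H vs es" "hd vs = x" "last vs = y"
      using c unfolding connected_graph_def by blast
    then show "reach H (edges H) (verts H) x y"
      using path_reach[of H vs es] by (auto simp: open_path_def is_walk_def)
  qed
next
  assume r: "\<forall>x\<in>verts H. \<forall>y\<in>verts H. reach H (edges H) (verts H) x y"
  show "connected_graph H" unfolding connected_graph_def
    using r reach_path by fast
qed

lemma biconnected_reach:
  "biconnected H \<longleftrightarrow> connected_graph H \<and> (\<forall>u\<in>verts H. \<forall>v\<in>verts H. \<forall>w\<in>verts H.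
      u \<noteq> v \<and> u \<noteq> w \<and> v \<noteq> w \<longrightarrow> reach H (edges H) (verts H - {w}) u v)"
proof -
  have "(\<exists>vs es. open_path H vs es \<and> hd vs = u \<and> last vs = v \<and> w \<notin> set vs) \<longleftrightarrow>
        reach H (edges H) (verts H - {w}) u v" for u v w
  proof
    assume "\<exists>vs es. open_path H vs es \<and> hd vs = u \<and> last vs = v \<and> w \<notin> set vs"
    then obtain vs es where "open_path H vs es" "hd vs = u" "last vs = v" "w \<notin> set vs" by blast
    then show "reach H (edges H) (verts H - {w}) u v"
      using path_reach[of H vs es "verts H - {w}" "edges H"] by (auto simp: open_path_def is_walk_def)
  next
    assume "reach H (edges H) (verts H - {w}) u v"
    from reach_path[OF this] show "\<exists>vs es. open_path H vs es \<and> hd vs = u \<and> last vs = v \<and> w \<notin> set vs"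
      by blast
  qed
  then show ?thesis unfolding biconnected_def by simp
qed

lemma card2_obtain:
  assumes "card S = 2" "z \<in> S"
  obtains a where "S = {z, a}" "a \<noteq> z"
proof -
  from assms(1) obtain x y where "S = {x, y}" "x \<noteq> y" by (auto simp: card_2_iff)
  with assms(2) that show ?thesis by auto
qed

lemma wf_ends:
  assumes "wf_graph H" "g \<in> edges H"
  shows "ends H g \<subseteq> verts H" "card (ends H g) = 2"
  using assms by (auto simp: wf_graph_def)

lemma two_edge_class:
  assumes wf: "wf_graph H" and g: "g \<in> edges H" and h: "h \<in> edges H" and gh: "g \<noteq> h"
    and z: "z \<in> ends H g" "z \<in> ends H h" "z \<notin> {u, v}"
  shows "same_sep_class H u v g h"
proof -
  obtain a where a: "ends H g = {z, a}" "a \<noteq> z" using card2_obtain[OF wf_ends(2)[OF wf g] z(1)] .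
  obtain b where b: "ends H h = {z, b}" "b \<noteq> z" using card2_obtain[OF wf_ends(2)[OF wf h] z(2)] .
  have vs: "a \<in> verts H" "b \<in> verts H" "z \<in> verts H" using wf_ends(1)[OF wf g] wf_ends(1)[OF wf h] a b by auto
  have iv: "internal_verts [a, z, b] = {z}" by (simp add: internal_verts_def)
  show ?thesis
  proof (cases "a = b")
    case False
    have "open_path H [a, z, b] [g, h]"
      unfolding open_path_def is_walk_def using a b vs g h False
      by (auto simp: less_Suc_eq insert_commute)
    then show ?thesis unfolding same_sep_class_def using iv z(3) by fastforce
  next
    case True
    have "closed_path H [a, z, a] [g, h]"
      unfolding closed_path_def is_walk_def using a b vs g h True gh
      by (auto simp: less_Suc_eq insert_commute)
    then show ?thesis unfolding same_sep_class_def using iv z(3) True by fastforce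
  qed
qed

lemma split_shared:
  assumes wf: "wf_graph H" and s: "sep_split_set H u v F" and g: "g \<in> F" and h: "h \<in> edges H" "h \<notin> F"
    and z: "z \<in> ends H g" "z \<in> ends H h"
  shows "z \<in> {u, v}"
proof (rule ccontr)
  assume "z \<notin> {u, v}"
  have gE: "g \<in> edges H" using s g by (auto simp: sep_split_set_def)
  have "same_sep_class H u v g h" using two_edge_class[OF wf gE h(1) _ z] g h \<open>z \<notin> {u,v}\<close> by auto
  then have "h \<in> F" using s g h(1) by (auto simp: sep_split_set_def)
  with h(2) show False by simp
qed

lemma sep_split_sym:
  assumes "sep_split_set H u v F"
  shows "sep_split_set H u v (edges H - F)"
proof -
  have sym: "same_sep_class H u v e f \<Longrightarrow> same_sep_class H u v f e" for e f
    unfolding same_sep_class_def by blast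
  have "edges H - (edges H - F) = F" using assms by (auto simp: sep_split_set_def)
  then show ?thesis using assms sym unfolding sep_split_set_def by auto
qed

lemma path_side:
  assumes "is_walk H vs es" "u \<notin> internal_verts vs" "v \<notin> internal_verts vs"
    and S: "\<forall>h1\<in>edges H. \<forall>h2\<in>edges H. \<forall>z. z \<in> ends H h1 \<longrightarrow> z \<in> ends H h2 \<longrightarrow> z \<notin> {u, v} \<longrightarrow> S h1 = S h2"
  shows "i < length es \<Longrightarrow> S (es ! i) = S (es ! 0)"
proof (induction i)
  case 0 then show ?case by simp
next
  case (Suc i)
  have l: "length vs = Suc (length es)" using assms(1) by (simp add: is_walk_def)
  have iv: "vs ! Suc i \<in> internal_verts vs"
  proof -
    have "butlast (tl vs) ! i = vs ! Suc i" using Suc.prems l by (simp add: nth_butlast nth_tl)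
    moreover have "i < length (butlast (tl vs))" using Suc.prems l by simp
    ultimately show ?thesis unfolding internal_verts_def by (metis nth_mem)
  qed
  have e1: "ends H (es ! i) = {vs ! i, vs ! Suc i}" "ends H (es ! Suc i) = {vs ! Suc i, vs ! Suc (Suc i)}"
    using assms(1) Suc.prems by (auto simp: is_walk_def)
  have inE: "es ! i \<in> edges H" "es ! Suc i \<in> edges H" using assms(1) Suc.prems by (auto simp: is_walk_def)
  have "S (es ! Suc i) = S (es ! i)"
  proof -
    have "vs ! Suc i \<notin> {u, v}" using iv assms(2,3) by auto
    moreover have "vs ! Suc i \<in> ends H (es ! i)" "vs ! Suc i \<in> ends H (es ! Suc i)" using e1 by auto
    ultimately show ?thesis using S inE by blast
  qed
  then show ?case using Suc by simp
qed

lemma sep_class_side: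
  assumes "same_sep_class H u v g h"
    and S: "\<And>h1 h2 z. h1 \<in> edges H \<Longrightarrow> h2 \<in> edges H \<Longrightarrow> z \<in> ends H h1 \<Longrightarrow> z \<in> ends H h2 \<Longrightarrow> z \<notin> {u, v} \<Longrightarrow> S h1 = S h2"
  shows "S g = S h"
proof -
  obtain vs es where p: "open_path H vs es \<or> closed_path H vs es" "g \<in> set es" "h \<in> set es"
    "u \<notin> internal_verts vs" "v \<notin> internal_verts vs"
    using assms(1) unfolding same_sep_class_def by blast
  have w: "is_walk H vs es" using p(1) by (auto simp: open_path_def closed_path_def)
  obtain i j where "i < length es" "g = es ! i" "j < length es" "h = es ! j"
    using p(2,3) by (auto simp: in_set_conv_nth)
  moreover have "\<forall>h1\<in>edges H. \<forall>h2\<in>edges H. \<forall>z. z \<in> ends H h1 \<longrightarrow> z \<in> ends H h2 \<longrightarrow> z \<notin> {u, v} \<longrightarrow> S h1 = S h2"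
    using S by blast
  ultimately show ?thesis using path_side[OF w p(4,5)] by metis
qed

lemma side_connects_to:
  assumes wf: "wf_graph H" and bc: "biconnected H" and s: "sep_split_set H u v F"
    and f: "f \<in> F" and a: "a \<in> ends H f" "a \<notin> {u, v}" and ts: "{t, s} = {u, v}"
  shows "reach H {g \<in> F. ends H g \<noteq> {u, v}} (\<Union>(ends H ` F)) a t"
proof -
  let ?F0 = "{g \<in> F. ends H g \<noteq> {u, v}}" and ?VF = "\<Union>(ends H ` F)"
  have uv: "u \<in> verts H" "v \<in> verts H" "u \<noteq> v" and FE: "F \<subseteq> edges H" using s by (auto simp: sep_split_set_def)
  have fE: "f \<in> edges H" using f FE by auto
  have aV: "a \<in> verts H" using wf_ends(1)[OF wf fE] a by auto
  have tsd: "t \<noteq> s" "t \<in> verts H" "s \<in> verts H" "a \<noteq> t" "a \<noteq> s" using ts uv a by (auto simp: doubleton_eq_iff)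
  have r: "reach H (edges H) (verts H - {s}) a t"
    using bc tsd aV unfolding biconnected_reach by auto
  have tS: "t \<notin> verts H - {u, v}" using ts by auto
  from reach_exit[OF r, of "verts H - {u, v}"] a(2) aV reach_in[of H "edges H" "(verts H - {s}) \<inter> (verts H - {u, v})" a t] tS
  obtain z g c where zgc: "reach H (edges H) ((verts H - {s}) \<inter> (verts H - {u, v})) a z" "g \<in> edges H"
    "ends H g = {z, c}" "c \<in> verts H - {s}" "c \<notin> verts H - {u, v}"
    by blast
  have ct: "c = t" using zgc(4,5) ts by auto
  have rz: "reach H (edges H) (verts H - {u, v}) a z" using reach_mono[OF zgc(1)] by auto
  let ?S = "{y. reach H ?F0 (?VF - {u, v}) a y}"
  have key: "g' \<in> F \<and> ends H g' \<noteq> {u, v}" if "x \<in> ?VF - {u, v}" "g' \<in> edges H" "x \<in> ends H g'" for x g'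
  proof -
    from that obtain g0 where "g0 \<in> F" "x \<in> ends H g0" by auto
    then have "g' \<in> F" using split_shared[OF wf s, of g0 g' x] that by auto
    then show ?thesis using that by auto
  qed
  have aS: "a \<in> ?S" using a f aV by (auto intro: rrefl)
  have zS: "z \<in> ?S"
  proof (rule reach_closed[OF rz aS])
    fix x g' y assume h: "x \<in> ?S" "g' \<in> edges H" "g' \<in> edges H" "ends H g' = {x, y}" "y \<in> verts H - {u, v}" "y \<in> verts H"
    have xi: "x \<in> ?VF - {u, v}" using h(1) reach_in by fastforce
    have g'F: "g' \<in> F \<and> ends H g' \<noteq> {u, v}" using key[OF xi h(2)] h(4) by auto
    have "y \<in> ?VF" using g'F h(4) by blast
    have "reach H ?F0 (?VF - {u, v}) a x" using h(1) by simp
    then have "reach H ?F0 (?VF - {u, v}) a y" by (rule rstep[where f=g']) (use h g'F \<open>y \<in> ?VF\<close> in auto)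
    then show "y \<in> ?S" by simp
  qed
  have zi: "z \<in> ?VF - {u, v}" using zS reach_in by fastforce
  have gF: "g \<in> F \<and> ends H g \<noteq> {u, v}" using key[OF zi zgc(2)] zgc(3) by auto
  have tVF: "t \<in> ?VF" using gF zgc(3) ct by blast
  have "reach H ?F0 (?VF - {u, v}) a z" using zS by simp
  then have "reach H ?F0 ?VF a z" by (rule reach_mono) auto
  then show ?thesis by (rule rstep[where f=g]) (use gF zgc ct tVF tsd in auto)
qed

lemma side_connects:
  assumes wf: "wf_graph H" and bc: "biconnected H" and s: "sep_split_set H u v F" and f: "f \<in> F"
  shows "reach H ({g \<in> F. ends H g \<noteq> {u, v}} \<union> {f}) (\<Union>(ends H ` F)) u v"
proof -
  have uv: "u \<in> verts H" "v \<in> verts H" "u \<noteq> v" and FE: "F \<subseteq> edges H" using s by (auto simp: sep_split_set_def)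
  have fE: "f \<in> edges H" using f FE by auto
  show ?thesis
  proof (cases "ends H f = {u, v}")
    case True
    then show ?thesis using f fE uv by (intro reach_edge[of f]) auto
  next
    case False
    obtain a where a: "a \<in> ends H f" "a \<notin> {u, v}"
    proof -
      obtain p q where "ends H f = {p, q}" "p \<noteq> q" using wf_ends(2)[OF wf fE] by (auto simp: card_2_iff)
      then show ?thesis using that False by auto
    qed
    have r1: "reach H {g \<in> F. ends H g \<noteq> {u, v}} (\<Union>(ends H ` F)) a u"
      by (rule side_connects_to[OF wf bc s f a, where s=v]) auto
    have r2: "reach H {g \<in> F. ends H g \<noteq> {u, v}} (\<Union>(ends H ` F)) a v"
      by (rule side_connects_to[OF wf bc s f a, where s=u]) auto
    have "reach H {g \<in> F. ends H g \<noteq> {u, v}} (\<Union>(ends H ` F)) u v"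
      using reach_trans[OF r2 reach_sym[OF r1]] .
    then show ?thesis by (rule reach_mono) auto
  qed
qed

lemma piece_simps:
  "verts (split_piece H u v F n) = \<Union>(ends H ` F) \<union> {u, v}"
  "edges (split_piece H u v F n) = F \<union> {Inr n}"
  "ends (split_piece H u v F n) = (ends H)(Inr n := {u, v})"
  by (simp_all add: split_piece_def)

lemma sep_split_basic:
  assumes "sep_split_set H u v F"
  shows "u \<in> verts H" "v \<in> verts H" "u \<noteq> v" "F \<subseteq> edges H" "card F \<ge> 2" "card (edges H - F) \<ge> 2"
  using assms by (auto simp: sep_split_set_def)

lemma piece_verts_sub:
  assumes wf: "wf_graph H" and s: "sep_split_set H u v F"
  shows "verts (split_piece H u v F n) \<subseteq> verts H"
  using sep_split_basic[OF s] wf by (auto simp: piece_simps wf_graph_def)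

lemma piece_wf:
  assumes wf: "wf_graph H" and s: "sep_split_set H u v F"
  shows "wf_graph (split_piece H u v F n)"
proof -
  have fin: "finite F" using sep_split_basic(4)[OF s] wf finite_subset by (auto simp: wf_graph_def)
  have "finite (\<Union>(ends H ` F))"
  proof (rule finite_Union)
    show "finite (ends H ` F)" using fin by simp
    show "\<And>M. M \<in> ends H ` F \<Longrightarrow> finite M"
      using wf sep_split_basic(4)[OF s] by (auto simp: wf_graph_def intro: finite_subset)
  qed
  then show ?thesis using fin wf sep_split_basic[OF s]
    by (auto simp: wf_graph_def piece_simps)
qed

lemma piece_shared:
  assumes wf: "wf_graph H" and s: "sep_split_set H u v F" and g: "g \<in> edges H" "g \<notin> F"
    and x: "x \<in> ends H g" "x \<in> verts (split_piece H u v F n)"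
  shows "x \<in> {u, v}"
proof -
  from x(2) have "x \<in> {u, v} \<or> (\<exists>g'\<in>F. x \<in> ends H g')" by (auto simp: piece_simps)
  then show ?thesis using split_shared[OF wf s _ g] x(1) by blast
qed

lemma card2_neq: "card {b, c} = 2 \<Longrightarrow> b \<noteq> c"
  by (cases "b = c") auto

lemma project:
  assumes wf: "wf_graph H" and s: "sep_split_set H u v F" and fresh: "Inr n \<notin> edges H"
    and r: "reach H E A a b" and a: "a \<in> verts (split_piece H u v F n)"
  shows "(b \<in> verts (split_piece H u v F n) \<longrightarrow> reach (split_piece H u v F n) ((E \<inter> F) \<union> {Inr n}) A a b) \<and>
         (b \<notin> verts (split_piece H u v F n) \<longrightarrow> (\<exists>t\<in>{u, v}. reach (split_piece H u v F n) ((E \<inter> F) \<union> {Inr n}) A a t))"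
  using r a
proof (induction rule: reach.induct)
  case (rrefl a) then show ?case by (auto intro: reach.rrefl)
next
  case (rstep a b g c)
  let ?P = "split_piece H u v F n" and ?E = "(E \<inter> F) \<union> {Inr n}"
  note b = sep_split_basic[OF s]
  have uvP: "u \<in> verts ?P" "v \<in> verts ?P" by (auto simp: piece_simps)
  have nF: "Inr n \<notin> F" using fresh b(4) by auto
  have bc: "b \<noteq> c" using rstep.hyps(4) wf_ends(2)[OF wf rstep.hyps(3)] card2_neq by metis
  have bA: "b \<in> A" using reach_in[OF rstep.hyps(1)] by simp
  have virt: "reach ?P ?E A a c" if "reach ?P ?E A a t" "{t, c} = {u, v}" for t
    by (rule reach.rstep[OF that(1), where f="Inr n"]) (use that(2) rstep.hyps(5) uvP b(3) in \<open>auto simp: piece_simps doubleton_eq_iff\<close>)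
  show ?case
  proof (cases "b \<in> verts ?P")
    case True
    then have Rb: "reach ?P ?E A a b" using rstep.IH rstep.prems by blast
    show ?thesis
    proof (cases "c \<in> verts ?P")
      case cP: True
      show ?thesis
      proof (cases "g \<in> F")
        case True
        have "g \<noteq> Inr n" using True nF by auto
        then have "reach ?P ?E A a c"
          by (rule_tac reach.rstep[OF Rb, where f=g]) (use True rstep.hyps cP in \<open>auto simp: piece_simps\<close>)
        then show ?thesis using cP by simp
      next
        case False
        have "b \<in> {u, v}" "c \<in> {u, v}"
          using piece_shared[OF wf s rstep.hyps(3) False] rstep.hyps(4) True cP by auto
        then have "{b, c} = {u, v}" using bc b(3) by auto
        then show ?thesis using virt[OF Rb] cP by simp
      qed
    next
      case cP: False
      have "g \<notin> F" using cP rstep.hyps(4) by (auto simp: piece_simps)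
      then have "b \<in> {u, v}" using piece_shared[OF wf s rstep.hyps(3)] rstep.hyps(4) True by auto
      then show ?thesis using Rb cP by blast
    qed
  next
    case False
    then obtain t where t: "t \<in> {u, v}" "reach ?P ?E A a t" using rstep.IH rstep.prems by blast
    show ?thesis
    proof (cases "c \<in> verts ?P")
      case cP: True
      have "g \<notin> F" using False rstep.hyps(4) by (auto simp: piece_simps)
      then have "c \<in> {u, v}" using piece_shared[OF wf s rstep.hyps(3)] rstep.hyps(4) cP by auto
      show ?thesis
      proof (cases "c = t")
        case True then show ?thesis using t cP by simp
      next
        case False
        then have "{t, c} = {u, v}" using t \<open>c \<in> {u, v}\<close> by auto
        then show ?thesis using virt[OF t(2)] cP by simp
      qed
    next
      case cP: False
      then show ?thesis using t by blast
    qed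
  qed
qed

lemma lift:
  assumes wf: "wf_graph H" and s: "sep_split_set H u v F" and fresh: "Inr n \<notin> edges H"
    and r: "reach (split_piece H u v F n) E1 A a b"
    and virt: "Inr n \<in> E1 \<Longrightarrow> u \<in> A \<Longrightarrow> v \<in> A \<Longrightarrow> reach H E2 A' u v"
    and EE: "E1 \<inter> F \<subseteq> E2" and AA: "A \<subseteq> A'"
  shows "reach H E2 A' a b"
  using r
proof (induction rule: reach.induct)
  case (rrefl a)
  then show ?case using piece_verts_sub[OF wf s] AA by (auto intro: reach.rrefl)
next
  case (rstep a b g c)
  let ?P = "split_piece H u v F n"
  have nF: "Inr n \<notin> F" using fresh sep_split_basic(4)[OF s] by auto
  have bA: "b \<in> A" using reach_in[OF rstep.hyps(1)] by simp
  show ?case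
  proof (cases "g = Inr n")
    case True
    then have bc: "{b, c} = {u, v}" using rstep.hyps(4) by (simp add: piece_simps)
    then have uvA: "u \<in> A" "v \<in> A" using bA rstep.hyps(5) by (auto simp: doubleton_eq_iff)
    have ruv: "reach H E2 A' u v" using virt[OF _ uvA] True rstep.hyps(2) by simp
    have "reach H E2 A' b c"
      using bc ruv reach_sym[OF ruv] by (auto simp: doubleton_eq_iff)
    then show ?thesis using reach_trans rstep.IH by metis
  next
    case False
    then have gF: "g \<in> F" using rstep.hyps(3) by (simp add: piece_simps)
    have cH: "c \<in> verts H" using piece_verts_sub[OF wf s] rstep.hyps(6) by auto
    show ?thesis
      by (rule reach.rstep[OF rstep.IH, where f=g])
         (use gF False EE AA rstep.hyps cH sep_split_basic(4)[OF s] in \<open>auto simp: piece_simps\<close>)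
  qed
qed

lemma piece_biconnected:
  assumes wf: "wf_graph H" and bc: "biconnected H" and s: "sep_split_set H u v F" and fresh: "Inr n \<notin> edges H"
  shows "biconnected (split_piece H u v F n)"
proof -
  let ?P = "split_piece H u v F n"
  have sub: "verts ?P \<subseteq> verts H" by (rule piece_verts_sub[OF wf s])
  have conn: "connected_graph ?P" unfolding connected_reach
  proof (intro ballI)
    fix x y assume xy: "x \<in> verts ?P" "y \<in> verts ?P"
    have "reach H (edges H) (verts H) x y" using bc xy sub unfolding biconnected_reach connected_reach by blast
    then have "reach ?P ((edges H \<inter> F) \<union> {Inr n}) (verts H) x y" using project[OF wf s fresh _ xy(1)] xy(2) by blast
    then show "reach ?P (edges ?P) (verts ?P) x y" by (rule reach_mono) (auto simp: piece_simps)
  qed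
  show ?thesis unfolding biconnected_reach
  proof (intro conjI conn ballI impI)
    fix x y w assume xyw: "x \<in> verts ?P" "y \<in> verts ?P" "w \<in> verts ?P" "x \<noteq> y \<and> x \<noteq> w \<and> y \<noteq> w"
    have "reach H (edges H) (verts H - {w}) x y" using bc xyw sub unfolding biconnected_reach by auto
    then have "reach ?P ((edges H \<inter> F) \<union> {Inr n}) (verts H - {w}) x y" using project[OF wf s fresh _ xyw(1)] xyw(2) by blast
    then show "reach ?P (edges ?P) (verts ?P - {w}) x y" by (rule reach_mono) (auto simp: piece_simps)
  qed
qed

lemma deg2:
  assumes wf: "wf_graph H" and bc: "biconnected H" and V: "w \<in> verts H" "a \<in> verts H" "b \<in> verts H"
    and d: "w \<noteq> a" "w \<noteq> b" "a \<noteq> b"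
  shows "\<exists>h1 h2. h1 \<in> edges H \<and> h2 \<in> edges H \<and> h1 \<noteq> h2 \<and> w \<in> ends H h1 \<and> w \<in> ends H h2"
proof -
  have "reach H (edges H) (verts H - {a}) w b" using bc V d unfolding biconnected_reach by auto
  from reach_first_step[OF this] d obtain h1 z1 where h1: "h1 \<in> edges H" "ends H h1 = {w, z1}" "z1 \<in> verts H - {a}"
    by auto
  have wz1: "w \<noteq> z1" using wf_ends(2)[OF wf h1(1)] h1(2) card2_neq by metis
  have "reach H (edges H) (verts H - {z1}) w a" using bc V d h1(3) wz1 unfolding biconnected_reach by auto
  from reach_first_step[OF this] d obtain h2 z2 where h2: "h2 \<in> edges H" "ends H h2 = {w, z2}" "z2 \<in> verts H - {z1}"
    by auto
  have wz2: "w \<noteq> z2" using wf_ends(2)[OF wf h2(1)] h2(2) card2_neq by metis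
  have "h1 \<noteq> h2" using h1(2) h2(2,3) wz2 by auto
  then show ?thesis using h1 h2 by blast
qed

lemma bad_side:
  assumes wf: "wf_graph H" and bc: "biconnected H" and nsp: "\<not> has_sep_pair H"
    and g: "g \<in> edges H" "ends H g = {x, y}" and c: "c \<in> verts H" "c \<notin> {x, y}"
    and nr: "\<not> reach H (edges H - {g}) (verts H - {c}) x y"
  shows "\<exists>h. h \<in> edges H \<and> ends H h = {x, c} \<and> (\<forall>h'\<in>edges H. x \<in> ends H h' \<longrightarrow> h' = g \<or> h' = h)"
proof -
  let ?E = "edges H - {g}" and ?A = "verts H - {c}"
  define X where "X = {z. reach H ?E ?A x z}"
  define X' where "X' = X - {x}"
  define F where "F = {h \<in> edges H. ends H h \<inter> X' \<noteq> {} \<or> ends H h = {c, x}}"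
  have xy: "x \<noteq> y" using wf_ends(2)[OF wf g(1)] g(2) card2_neq by metis
  have xyV: "x \<in> verts H" "y \<in> verts H" using wf_ends(1)[OF wf g(1)] g(2) by auto
  have yX: "y \<notin> X" using nr by (simp add: X_def)
  have xX': "x \<notin> X'" by (simp add: X'_def)
  have X'cV: "z \<in> verts H" "z \<noteq> c" if "z \<in> X'" for z using that reach_in by (fastforce simp: X'_def X_def)+
  have ext: "z \<in> X" if "w \<in> X" "h \<in> edges H" "h \<noteq> g" "ends H h = {w, z}" "z \<noteq> c" for w h z
  proof -
    have "z \<in> verts H" using wf_ends(1)[OF wf that(2)] that(4) by auto
    have "reach H ?E ?A x w" using that(1) by (simp add: X_def)
    then have "reach H ?E ?A x z" by (rule reach.rstep[where f=h]) (use that \<open>z \<in> verts H\<close> in auto)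
    then show ?thesis by (simp add: X_def)
  qed
  have side: "ends H h2 \<inter> X' \<noteq> {}" if hyp: "h1 \<in> edges H" "h2 \<in> edges H" "z \<in> ends H h1" "z \<in> ends H h2" "z \<notin> {c, x}"
    "ends H h1 \<inter> X' \<noteq> {}" for h1 h2 z
  proof (rule ccontr)
    assume "\<not> ends H h2 \<inter> X' \<noteq> {}"
    then have zX': "z \<notin> X'" using hyp(4) by auto
    from hyp(6) obtain w where w: "w \<in> ends H h1" "w \<in> X'" by auto
    have wz: "w \<noteq> z" using w zX' by auto
    have e1: "ends H h1 = {w, z}"
    proof -
      obtain q where "ends H h1 = {z, q}" "q \<noteq> z" using card2_obtain[OF wf_ends(2)[OF wf hyp(1)] hyp(3)] .
      then show ?thesis using w wz by auto
    qed
    have "h1 \<noteq> g"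
    proof
      assume "h1 = g"
      then have "{w, z} = {x, y}" using e1 g(2) by simp
      then have "w = x \<or> w = y" by auto
      then show False using w(2) xX' yX by (auto simp: X'_def)
    qed
    then have "z \<in> X" using ext[of w h1 z] w e1 hyp(1,5) by (auto simp: X'_def)
    then show False using zX' hyp(5) by (auto simp: X'_def)
  qed
  have closed: "\<forall>e\<in>F. \<forall>f\<in>edges H. same_sep_class H c x e f \<longrightarrow> f \<in> F"
  proof (intro ballI impI)
    fix e f assume e: "e \<in> F" and f: "f \<in> edges H" and cl: "same_sep_class H c x e f"
    let ?S = "\<lambda>h. ends H h \<inter> X' \<noteq> {} \<or> ends H h = {c, x}"
    have "?S e = ?S f"
    proof (rule sep_class_side[OF cl])
      fix h1 h2 z assume h: "h1 \<in> edges H" "h2 \<in> edges H" "z \<in> ends H h1" "z \<in> ends H h2" "z \<notin> {c, x}"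
      then have "ends H h1 \<noteq> {c, x}" "ends H h2 \<noteq> {c, x}" by auto
      then show "?S h1 = ?S h2" using side[OF h] side[OF h(2,1,4,3,5)] by blast
    qed
    then show "f \<in> F" using e f by (simp add: F_def)
  qed
  have FE: "F \<subseteq> edges H" by (auto simp: F_def)
  have finE: "finite (edges H)" using wf by (simp add: wf_graph_def)
  have cx: "c \<noteq> x" using c by auto
  have "\<not> sep_split_set H c x F" using nsp by (auto simp: has_sep_pair_def)
  then have card: "card F < 2 \<or> card (edges H - F) < 2"
    using closed FE c(1) xyV cx unfolding sep_split_set_def by auto
  have gnF: "g \<notin> F"
  proof -
    have "ends H g \<inter> X' = {}" using g(2) xX' yX by (auto simp: X'_def)
    moreover have "ends H g \<noteq> {c, x}" using g(2) c(2) by (auto simp: doubleton_eq_iff)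
    ultimately show ?thesis by (simp add: F_def)
  qed
  obtain hy where hy: "hy \<in> edges H" "hy \<noteq> g" "y \<in> ends H hy"
  proof -
    from deg2[OF wf bc xyV(2) xyV(1) c(1)] c(2) xy obtain h1 h2 where
      "h1 \<in> edges H" "h2 \<in> edges H" "h1 \<noteq> h2" "y \<in> ends H h1" "y \<in> ends H h2" by auto
    then show ?thesis using that by metis
  qed
  have hynF: "hy \<notin> F"
  proof
    assume "hy \<in> F"
    obtain z where z: "ends H hy = {y, z}" "z \<noteq> y" using card2_obtain[OF wf_ends(2)[OF wf hy(1)] hy(3)] .
    have "ends H hy \<noteq> {c, x}" using hy(3) c(2) xy by auto
    then have "z \<in> X'" using \<open>hy \<in> F\<close> z yX by (auto simp: F_def X'_def)
    then have "y \<in> X" using ext[of z hy y] z hy c(2) by (auto simp: X'_def insert_commute)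
    then show False using yX by simp
  qed
  have "card {g, hy} \<le> card (edges H - F)"
    by (rule card_mono) (use finE hy g(1) gnF hynF in auto)
  then have c2: "card (edges H - F) \<ge> 2" using hy(2) by simp
  then have cF: "card F < 2" using card by simp
  have Fle1: "a = b" if "a \<in> F" "b \<in> F" for a b
  proof (rule ccontr)
    assume "a \<noteq> b"
    then have "card {a, b} \<le> card F" using that finE FE by (intro card_mono) (auto intro: finite_subset)
    then show False using cF \<open>a \<noteq> b\<close> by simp
  qed
  obtain hx where hx: "hx \<in> edges H" "hx \<noteq> g" "x \<in> ends H hx"
  proof -
    from deg2[OF wf bc xyV(1) xyV(2) c(1)] c(2) xy obtain h1 h2 where
      "h1 \<in> edges H" "h2 \<in> edges H" "h1 \<noteq> h2" "x \<in> ends H h1" "x \<in> ends H h2" by auto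
    then show ?thesis using that by metis
  qed
  have edge_at_x: "h' \<in> F \<and> (ends H h' = {x, c} \<or> (\<exists>z. ends H h' = {x, z} \<and> z \<in> X'))"
    if hyp: "h' \<in> edges H" "h' \<noteq> g" "x \<in> ends H h'" for h'
  proof -
    obtain z where z: "ends H h' = {x, z}" "z \<noteq> x" using card2_obtain[OF wf_ends(2)[OF wf hyp(1)] hyp(3)] .
    have xX: "x \<in> X" using xyV c(2) by (auto simp: X_def intro: rrefl)
    show ?thesis
    proof (cases "z = c")
      case True then show ?thesis using z hyp(1) by (auto simp: F_def insert_commute)
    next
      case False
      then have "z \<in> X" using ext[OF xX hyp(1,2) z(1)] by simp
      then have "z \<in> X'" using z(2) by (simp add: X'_def)
      then show ?thesis using z hyp(1) by (auto simp: F_def)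
    qed
  qed
  have hxF: "hx \<in> F" using edge_at_x[OF hx] by simp
  have X'e: "X' = {}"
  proof (rule ccontr)
    assume "X' \<noteq> {}"
    then obtain w where w: "w \<in> X'" by auto
    have wd: "w \<noteq> x" "w \<noteq> c" "w \<noteq> y" using w X'cV[OF w] yX by (auto simp: X'_def)
    from deg2[OF wf bc X'cV(1)[OF w] xyV(1) c(1)] wd c(2) obtain h1 h2 where
      "h1 \<in> edges H" "h2 \<in> edges H" "h1 \<noteq> h2" "w \<in> ends H h1" "w \<in> ends H h2" by auto
    then have "h1 \<in> F" "h2 \<in> F" "h1 \<noteq> h2" using w by (auto simp: F_def)
    then show False using Fle1 by blast
  qed
  have hxe: "ends H hx = {x, c}" using edge_at_x[OF hx] X'e by auto
  have "\<forall>h'\<in>edges H. x \<in> ends H h' \<longrightarrow> h' = g \<or> h' = hx"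
  proof (intro ballI impI)
    fix h' assume "h' \<in> edges H" "x \<in> ends H h'"
    then show "h' = g \<or> h' = hx" using edge_at_x[of h'] Fle1[OF _ hxF] by blast
  qed
  then show ?thesis using hx(1) hxe by blast
qed

lemma bad_triconnected_cycle:
  assumes wf: "wf_graph H" and bc: "biconnected H" and nsp: "\<not> has_sep_pair H"
    and g: "g \<in> edges H" "ends H g = {x, y}" and c: "c \<in> verts H" "c \<notin> {x, y}"
    and nr: "\<not> reach H (edges H - {g}) (verts H - {c}) x y"
  shows "is_cycle H"
proof -
  obtain hx where hx: "hx \<in> edges H" "ends H hx = {x, c}" "\<forall>h'\<in>edges H. x \<in> ends H h' \<longrightarrow> h' = g \<or> h' = hx"
    using bad_side[OF assms] by blast
  have nr': "\<not> reach H (edges H - {g}) (verts H - {c}) y x" using nr reach_sym by metis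
  obtain hy where hy: "hy \<in> edges H" "ends H hy = {y, c}" "\<forall>h'\<in>edges H. y \<in> ends H h' \<longrightarrow> h' = g \<or> h' = hy"
    using bad_side[OF wf bc nsp g(1) _ c(1) _ nr'] g(2) c(2) by (auto simp: insert_commute)
  have xy: "x \<noteq> y" using wf_ends(2)[OF wf g(1)] g(2) card2_neq by metis
  have xyV: "x \<in> verts H" "y \<in> verts H" using wf_ends(1)[OF wf g(1)] g(2) by auto
  have cxy: "c \<noteq> x" "c \<noteq> y" using c by auto
  have V: "verts H = {x, y, c}"
  proof (rule ccontr)
    assume "verts H \<noteq> {x, y, c}"
    then obtain z where z: "z \<in> verts H" "z \<notin> {x, y, c}" using xyV c(1) by auto
    have "reach H (edges H) (verts H - {c}) x z" using bc z xyV c unfolding biconnected_reach by auto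
    then have "z \<in> {x, y}"
    proof (rule reach_closed)
      show "x \<in> {x, y}" by simp
    next
      fix s f q assume h: "s \<in> {x, y}" "f \<in> edges H" "f \<in> edges H" "ends H f = {s, q}" "q \<in> verts H - {c}" "q \<in> verts H"
      show "q \<in> {x, y}"
      proof (cases "s = x")
        case True
        then have "f = g \<or> f = hx" using hx(3) h by auto
        then show ?thesis using h g(2) hx(2) True by (auto simp: doubleton_eq_iff)
      next
        case False
        then have "s = y" using h by auto
        then have "f = g \<or> f = hy" using hy(3) h by auto
        then show ?thesis using h g(2) hy(2) \<open>s = y\<close> by (auto simp: doubleton_eq_iff)
      qed
    qed
    then show False using z by auto
  qed
  have E: "edges H = {g, hy, hx}"
  proof
    show "{g, hy, hx} \<subseteq> edges H" using g hx hy by auto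
    show "edges H \<subseteq> {g, hy, hx}"
    proof
      fix h' assume h': "h' \<in> edges H"
      have "ends H h' \<subseteq> {x, y, c}" "card (ends H h') = 2" using wf_ends[OF wf h'] V by auto
      then have "x \<in> ends H h' \<or> y \<in> ends H h'"
        by (metis card2_neq card_1_singleton_iff insert_absorb2 insert_subset subset_insertI2 subset_singletonD one_neq_zero
            card.empty zero_neq_numeral numeral_eq_one_iff semiring_norm(85) subset_insert)
      then show "h' \<in> {g, hy, hx}" using hx(3) hy(3) h' by auto
    qed
  qed
  have cp: "closed_path H [x, y, c, x] [g, hy, hx]"
  proof -
    have "hy \<noteq> g" using hy(2) g(2) cxy xy by (auto simp: doubleton_eq_iff)
    moreover have "hx \<noteq> g" using hx(2) g(2) cxy xy by (auto simp: doubleton_eq_iff)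
    moreover have "hx \<noteq> hy" using hx(2) hy(2) cxy xy by (auto simp: doubleton_eq_iff)
    ultimately show ?thesis unfolding closed_path_def is_walk_def
      using g hx hy xyV c(1) xy cxy by (auto simp: less_Suc_eq insert_commute)
  qed
  show ?thesis unfolding is_cycle_def
    by (intro exI[of _ "[x, y, c, x]"] exI[of _ "[g, hy, hx]"]) (use cp V E in auto)
qed

lemma closed_rot1:
  assumes cp: "closed_path H vs es"
  shows "closed_path H (tl vs @ [vs ! 1]) (tl es @ [hd es]) \<and> set (tl vs @ [vs ! 1]) = set vs
         \<and> set (tl es @ [hd es]) = set es"
proof -
  have w: "is_walk H vs es" and l2: "length es \<ge> 2" and hl: "hd vs = last vs" and dt: "distinct (tl vs)"
    and de: "distinct es" using cp by (auto simp: closed_path_def)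
  have l: "length vs = Suc (length es)" using w by (simp add: is_walk_def)
  obtain v0 ws where vs: "vs = v0 # ws" using l by (cases vs) auto
  obtain e0 es' where es: "es = e0 # es'" using l2 by (cases es) auto
  have lws: "length ws = length es" using l vs by simp
  have wsne: "ws \<noteq> []" using lws l2 by auto
  have v0: "v0 = last ws" using hl vs wsne by simp
  have v1: "vs ! 1 = ws ! 0" using vs by simp
  have ends_i: "ends H (es ! i) = {vs ! i, vs ! Suc i}" if "i < length es" for i
    using w that by (simp add: is_walk_def)
  have w': "is_walk H (ws @ [ws ! 0]) (es' @ [e0])"
    unfolding is_walk_def
  proof (intro conjI allI impI)
    show "length (ws @ [ws ! 0]) = Suc (length (es' @ [e0]))" using lws es by simp
    have "ws ! 0 \<in> set ws" using wsne by simp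
    then show "set (ws @ [ws ! 0]) \<subseteq> verts H" using w vs by (auto simp: is_walk_def)
    show "set (es' @ [e0]) \<subseteq> edges H" using w es by (auto simp: is_walk_def)
    fix i assume i: "i < length (es' @ [e0])"
    show "ends H ((es' @ [e0]) ! i) = {(ws @ [ws ! 0]) ! i, (ws @ [ws ! 0]) ! Suc i}"
    proof (cases "i < length es'")
      case True
      have "ends H (es ! Suc i) = {vs ! Suc i, vs ! Suc (Suc i)}" using ends_i[of "Suc i"] True es by simp
      then show ?thesis using True es vs lws by (simp add: nth_append)
    next
      case False
      then have ii: "i = length es'" using i by simp
      have "ends H (es ! 0) = {vs ! 0, vs ! 1}" using ends_i[of 0] l2 by fastforce
      moreover have "(ws @ [ws ! 0]) ! i = v0" using ii lws es v0 wsne by (simp add: nth_append last_conv_nth)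
      moreover have "(ws @ [ws ! 0]) ! Suc i = ws ! 0" using ii lws es by (simp add: nth_append)
      ultimately show ?thesis using ii es vs by (simp add: nth_append)
    qed
  qed
  have dws: "distinct ws" using dt vs by simp
  have d': "distinct (tl (ws @ [ws ! 0]))"
  proof -
    obtain w0 ws' where "ws = w0 # ws'" using wsne by (cases ws) auto
    then show ?thesis using dws by simp
  qed
  have cp': "closed_path H (ws @ [ws ! 0]) (es' @ [e0])"
    unfolding closed_path_def using w' d' de es l2 wsne by (auto simp: hd_append hd_conv_nth)
  have s1: "set (ws @ [ws ! 0]) = set vs" using vs v0 wsne by auto
  have s2: "set (es' @ [e0]) = set es" using es by auto
  show ?thesis using cp' s1 s2 vs es v1 by simp
qed

lemma closed_rotate:
  assumes cp: "closed_path H vs es"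
  shows "\<exists>vs'. closed_path H vs' (rotate j es) \<and> set vs' = set vs"
proof (induction j)
  case 0 then show ?case using cp by auto
next
  case (Suc j)
  then obtain vs' where vs': "closed_path H vs' (rotate j es)" "set vs' = set vs" by blast
  have ne: "rotate j es \<noteq> []" using vs' by (auto simp: closed_path_def)
  have "rotate (Suc j) es = tl (rotate j es) @ [hd (rotate j es)]"
    by (simp only: rotate_Suc rotate1_hd_tl[OF ne])
  then show ?case using closed_rot1[OF vs'(1)] vs'(2) by metis
qed

lemma cycle_rot:
  assumes "is_cycle H" "h \<in> edges H"
  shows "\<exists>vs es. closed_path H vs es \<and> set vs = verts H \<and> set es = edges H \<and> length es \<ge> 3 \<and> last es = h"
proof -
  obtain vs es where c: "closed_path H vs es" "set vs = verts H" "set es = edges H" "length es \<ge> 3"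
    using assms(1) by (auto simp: is_cycle_def)
  obtain i where i: "i < length es" "es ! i = h" using c(3) assms(2) by (metis in_set_conv_nth)
  obtain vs' where vs': "closed_path H vs' (rotate (Suc i) es)" "set vs' = set vs" using closed_rotate[OF c(1)] by blast
  have "last (rotate (Suc i) es) = es ! i"
  proof -
    have ne: "rotate (Suc i) es \<noteq> []" using c(4) by auto
    have "last (rotate (Suc i) es) = rotate (Suc i) es ! (length es - 1)"
      using ne by (simp add: last_conv_nth)
    also have "\<dots> = es ! ((Suc i + (length es - 1)) mod length es)"
      using c(4) by (intro nth_rotate) simp
    also have "(Suc i + (length es - 1)) mod length es = i"
    proof -
      have "Suc i + (length es - 1) = i + length es" using i(1) by simp
      then show ?thesis using i(1) by simp
    qed
    finally show ?thesis .
  qed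
  then show ?thesis using vs' c i by (intro exI[of _ vs'] exI[of _ "rotate (Suc i) es"]) auto
qed

lemma distinct_last_butlast: "distinct xs \<Longrightarrow> xs \<noteq> [] \<Longrightarrow> last xs \<notin> set (butlast xs)"
proof -
  assume "distinct xs" "xs \<noteq> []"
  then have "distinct (butlast xs @ [last xs])" by simp
  then show ?thesis by simp
qed

lemma set_butlast_last: "xs \<noteq> [] \<Longrightarrow> set xs = insert (last xs) (set (butlast xs))"
proof -
  assume "xs \<noteq> []"
  then have "set xs = set (butlast xs @ [last xs])" by simp
  then show ?thesis by auto
qed

lemma closed_open:
  assumes cp: "closed_path H vs es"
  shows "open_path H (butlast vs) (butlast es)" "ends H (last es) = {last (butlast vs), hd vs}"
    "hd (butlast vs) = hd vs" "set (butlast vs) = set vs" "set es = insert (last es) (set (butlast es))"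
    "last es \<notin> set (butlast es)" "distinct (butlast es)"
proof -
  have w: "is_walk H vs es" and l2: "length es \<ge> 2" and hl: "hd vs = last vs" and dt: "distinct (tl vs)"
    and de: "distinct es" using cp by (auto simp: closed_path_def)
  have l: "length vs = Suc (length es)" using w by (simp add: is_walk_def)
  obtain v0 ws where vs: "vs = v0 # ws" using l by (cases vs) auto
  have lws: "length ws = length es" using l vs by simp
  have wsne: "ws \<noteq> []" using lws l2 by auto
  have v0: "v0 = last ws" using hl vs wsne by simp
  have bv: "butlast vs = v0 # butlast ws" using vs wsne by simp
  have dws: "distinct ws" using dt vs by simp
  have "distinct (butlast ws)" "last ws \<notin> set (butlast ws)"
    using dws wsne by (simp_all add: distinct_butlast distinct_last_butlast)
  then have "distinct (butlast vs)" using bv v0 by simp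
  moreover have "is_walk H (butlast vs) (butlast es)"
  proof -
    have "is_walk H (take (Suc (length es - 1)) vs) (take (length es - 1) es)"
      using walk_take[OF w, of "length es - 1"] by simp
    moreover have "Suc (length es - 1) = length es" using l2 by simp
    moreover have "take (length es) vs = butlast vs" using l by (simp add: butlast_conv_take)
    moreover have "take (length es - 1) es = butlast es" by (simp add: butlast_conv_take)
    ultimately show ?thesis by simp
  qed
  ultimately show "open_path H (butlast vs) (butlast es)" by (simp add: open_path_def)
  have ne: "es \<noteq> []" using l2 by auto
  have "ends H (last es) = {vs ! (length es - 1), vs ! length es}"
    using w ne by (simp add: is_walk_def last_conv_nth)
  moreover have "vs ! length es = hd vs"
  proof -
    have "vs ! length es = last vs" using l by (subst last_conv_nth) auto
    then show ?thesis using hl by simp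
  qed
  moreover have "vs ! (length es - 1) = last (butlast vs)"
  proof -
    have "butlast vs \<noteq> []" using l ne by (cases vs) auto
    then have "last (butlast vs) = butlast vs ! (length (butlast vs) - 1)" by (simp add: last_conv_nth)
    also have "\<dots> = vs ! (length es - 1)" using l ne by (simp add: nth_butlast)
    finally show ?thesis by simp
  qed
  ultimately show "ends H (last es) = {last (butlast vs), hd vs}" by simp
  show "hd (butlast vs) = hd vs" using bv vs by simp
  show "set (butlast vs) = set vs" using bv vs v0 wsne set_butlast_last[of ws] by auto
  show "set es = insert (last es) (set (butlast es))" using ne by (rule set_butlast_last)
  show "last es \<notin> set (butlast es)" "distinct (butlast es)" using de ne by (simp_all add: distinct_butlast distinct_last_butlast)
qed

lemma walk_rev:
  assumes w: "is_walk H vs es"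
  shows "is_walk H (rev vs) (rev es)"
  unfolding is_walk_def
proof (intro conjI allI impI)
  have l: "length vs = Suc (length es)" using w by (simp add: is_walk_def)
  show "length (rev vs) = Suc (length (rev es))" using l by simp
  show "set (rev vs) \<subseteq> verts H" "set (rev es) \<subseteq> edges H" using w by (auto simp: is_walk_def)
  fix i assume i: "i < length (rev es)"
  let ?j = "length es - Suc i"
  have j: "?j < length es" using i by simp
  have "rev es ! i = es ! ?j" using i by (simp add: rev_nth)
  moreover have "rev vs ! i = vs ! Suc ?j" using i l by (simp add: rev_nth Suc_diff_Suc)
  moreover have "rev vs ! Suc i = vs ! ?j" using i l by (simp add: rev_nth)
  ultimately show "ends H (rev es ! i) = {rev vs ! i, rev vs ! Suc i}"
    using w j by (auto simp: is_walk_def)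
qed

lemma walk_append:
  assumes w1: "is_walk H p q" and w2: "is_walk H p' q'" and pp: "last p = hd p'"
  shows "is_walk H (butlast p @ p') (q @ q')"
  unfolding is_walk_def
proof (intro conjI allI impI)
  have l1: "length p = Suc (length q)" and l2: "length p' = Suc (length q')" using w1 w2 by (auto simp: is_walk_def)
  have lb: "length (butlast p) = length q" using l1 by simp
  show "length (butlast p @ p') = Suc (length (q @ q'))" using lb l2 by simp
  show "set (butlast p @ p') \<subseteq> verts H" using w1 w2 by (auto simp: is_walk_def dest: in_set_butlastD)
  show "set (q @ q') \<subseteq> edges H" using w1 w2 by (auto simp: is_walk_def)
  fix i assume i: "i < length (q @ q')"
  show "ends H ((q @ q') ! i) = {(butlast p @ p') ! i, (butlast p @ p') ! Suc i}"
  proof (cases "i < length q")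
    case True
    have a: "(butlast p @ p') ! i = p ! i" using True lb by (simp add: nth_append nth_butlast)
    have b: "(butlast p @ p') ! Suc i = p ! Suc i"
    proof (cases "Suc i < length q")
      case True then show ?thesis using lb by (simp add: nth_append nth_butlast)
    next
      case False
      then have si: "Suc i = length q" using \<open>i < length q\<close> by simp
      have "p ! Suc i = last p" using si l1 by (subst last_conv_nth) auto
      moreover have "(butlast p @ p') ! Suc i = hd p'" using si lb l2 by (cases p') (auto simp: nth_append)
      ultimately show ?thesis using pp by simp
    qed
    show ?thesis using True a b w1 by (simp add: nth_append is_walk_def)
  next
    case False
    then show ?thesis using w2 i lb by (simp add: nth_append is_walk_def Suc_diff_le)
  qed
qed

lemma walk_transfer:
  assumes "is_walk H vs es" "set vs \<subseteq> verts H'" "set es \<subseteq> edges H'" "\<forall>e\<in>set es. ends H' e = ends H e"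
  shows "is_walk H' vs es"
  using assms unfolding is_walk_def by auto

lemma closed_idx:
  assumes cp: "closed_path H vs es"
  shows "vs ! 0 = vs ! length es"
    "\<And>i j. 0 < i \<Longrightarrow> i \<le> length es \<Longrightarrow> 0 < j \<Longrightarrow> j \<le> length es \<Longrightarrow> vs ! i = vs ! j \<longleftrightarrow> i = j"
proof -
  have w: "is_walk H vs es" and hl: "hd vs = last vs" and dt: "distinct (tl vs)" using cp by (auto simp: closed_path_def)
  have l: "length vs = Suc (length es)" using w by (simp add: is_walk_def)
  have ne: "vs \<noteq> []" using l by auto
  show "vs ! 0 = vs ! length es" using hl ne l by (simp add: hd_conv_nth last_conv_nth)
  fix i j assume ij: "0 < i" "i \<le> length es" "0 < j" "j \<le> length es"
  have "vs ! i = tl vs ! (i - 1)" "vs ! j = tl vs ! (j - 1)" using ij l by (simp_all add: nth_tl)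
  moreover have "length (tl vs) = length es" using l by simp
  ultimately show "vs ! i = vs ! j \<longleftrightarrow> i = j" using dt ij nth_eq_iff_index_eq[OF dt, of "i - 1" "j - 1"] by auto
qed

lemma cycle_open_path:
  assumes "is_cycle A" "h \<in> edges A"
  shows "\<exists>p q. open_path A p q \<and> set p = verts A \<and> set q = edges A - {h} \<and> distinct q \<and>
    ends A h = {last p, hd p} \<and> length q \<ge> 2"
proof -
  obtain vs es where c: "closed_path A vs es" "set vs = verts A" "set es = edges A" "length es \<ge> 3" "last es = h"
    using cycle_rot[OF assms] by blast
  note co = closed_open[OF c(1)]
  have "set (butlast es) = edges A - {h}" using co(5,6) c(3,5) by auto
  moreover have "length (butlast es) \<ge> 2" using c(4) by simp
  ultimately show ?thesis using co c by (intro exI[of _ "butlast vs"] exI[of _ "butlast es"]) auto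
qed

lemma open_path_rev: "open_path H p q \<Longrightarrow> open_path H (rev p) (rev q)"
  by (simp add: open_path_def walk_rev)

lemma merge_cycles:
  assumes cA: "is_cycle A" and cB: "is_cycle B" and nA: "Inr n \<in> edges A" and nB: "Inr n \<in> edges B"
    and EE: "edges A \<inter> edges B = {Inr n}" and VV: "verts A \<inter> verts B \<subseteq> ends A (Inr n)"
    and en: "ends A (Inr n) = ends B (Inr n)"
  shows "is_cycle (merge_graphs A B n)"
proof -
  let ?M = "merge_graphs A B n"
  have Mv: "verts ?M = verts A \<union> verts B" and Me: "edges ?M = (edges A \<union> edges B) - {Inr n}"
    and Mends: "ends ?M = (\<lambda>e. if e \<in> edges A then ends A e else ends B e)" by (simp_all add: merge_graphs_def)
  obtain pa qa where pa: "open_path A pa qa" "set pa = verts A" "set qa = edges A - {Inr n}" "distinct qa"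
    "ends A (Inr n) = {last pa, hd pa}" "length qa \<ge> 2"
    using cycle_open_path[OF cA nA] by blast
  obtain pb qb where pb: "open_path B pb qb" "set pb = verts B" "set qb = edges B - {Inr n}" "distinct qb"
    "ends B (Inr n) = {last pb, hd pb}" "length qb \<ge> 2"
    using cycle_open_path[OF cB nB] by blast
  have lpa: "length pa = Suc (length qa)" using pa(1) by (simp add: open_path_def is_walk_def)
  obtain a0 mid a1 where pa_eq: "pa = a0 # mid @ [a1]"
  proof -
    obtain a0 r where r: "pa = a0 # r" using lpa by (cases pa) auto
    then have "r \<noteq> []" using lpa pa(6) by auto
    then have "r = butlast r @ [last r]" by simp
    then show ?thesis using that r by metis
  qed
  have dpa: "distinct pa" using pa(1) by (simp add: open_path_def)
  have a01: "a0 \<noteq> a1" "a0 \<notin> set mid" "a1 \<notin> set mid" using dpa pa_eq by auto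
  have ends_n: "ends A (Inr n) = {a1, a0}" using pa(5) pa_eq by simp
  obtain pb' qb' where pb': "open_path B pb' qb'" "set pb' = verts B" "set qb' = edges B - {Inr n}" "distinct qb'"
    "hd pb' = a1" "last pb' = a0"
  proof (cases "hd pb = a1")
    case True
    then have "last pb = a0" using pb(5) en ends_n a01(1) by (auto simp: doubleton_eq_iff)
    then show ?thesis by (rule_tac that[of pb qb]) (use pb True in simp_all)
  next
    case False
    then have h: "hd pb = a0" "last pb = a1" using pb(5) en ends_n a01(1) by (auto simp: doubleton_eq_iff)
    have ne: "pb \<noteq> []" using pb(1) by (auto simp: open_path_def is_walk_def)
    have "hd (rev pb) = a1" "last (rev pb) = a0" using h ne by (simp_all add: hd_rev last_rev)
    then show ?thesis by (rule_tac that[of "rev pb" "rev qb"]) (use open_path_rev[OF pb(1)] pb in simp_all)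
  qed
  have wa: "is_walk ?M pa qa"
    by (rule walk_transfer[of A]) (use pa(1) pa(2,3) in \<open>auto simp: open_path_def Mv Me Mends\<close>)
  have wb: "is_walk ?M pb' qb'"
  proof (rule walk_transfer[of B])
    show "is_walk B pb' qb'" using pb'(1) by (simp add: open_path_def)
    show "set pb' \<subseteq> verts ?M" using pb'(2) Mv by simp
    show "set qb' \<subseteq> edges ?M" using pb'(3) Me by auto
    show "\<forall>e\<in>set qb'. ends ?M e = ends B e" using pb'(3) EE Mends by auto
  qed
  have lpa1: "last pa = hd pb'" using pa_eq pb'(5) by simp
  define vs where "vs = butlast pa @ pb'"
  define es where "es = qa @ qb'"
  have w: "is_walk ?M vs es" unfolding vs_def es_def by (rule walk_append[OF wa wb lpa1])
  have bpa: "butlast pa = a0 # mid" using pa_eq by simp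
  have pbne: "pb' \<noteq> []" using pb'(1) by (auto simp: open_path_def is_walk_def)
  have dpb: "distinct pb'" using pb'(1) by (simp add: open_path_def)
  have disj: "set mid \<inter> set pb' = {}"
  proof (rule ccontr)
    assume "set mid \<inter> set pb' \<noteq> {}"
    then obtain z where z: "z \<in> set mid" "z \<in> set pb'" by auto
    then have "z \<in> verts A \<inter> verts B" using pa(2) pb'(2) pa_eq by auto
    then have "z \<in> {a1, a0}" using VV ends_n by auto
    then show False using z a01 by auto
  qed
  have cp: "closed_path ?M vs es"
    unfolding closed_path_def
  proof (intro conjI)
    show "is_walk ?M vs es" by (rule w)
    show "2 \<le> length es" using pa(6) by (simp add: es_def)
    show "hd vs = last vs" using bpa pbne pb'(6) by (simp add: vs_def)
    show "distinct (tl vs)" using bpa dpa pa_eq dpb disj by (auto simp: vs_def)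
    show "distinct es" using pa(3,4) pb'(3,4) EE by (auto simp: es_def)
  qed
  have sv: "set vs = verts ?M"
  proof -
    have "a1 \<in> verts B" using pb'(2,5) pbne by (metis hd_in_set)
    then show ?thesis using pa(2) pb'(2) pa_eq Mv by (auto simp: vs_def)
  qed
  have se: "set es = edges ?M" using pa(3) pb'(3) Me by (auto simp: es_def)
  have "length es \<ge> 3"
  proof -
    have "length qb' \<noteq> 0"
    proof
      assume "length qb' = 0"
      then have "length pb' = 1" using pb'(1) by (simp add: open_path_def is_walk_def)
      then have "hd pb' = last pb'" by (cases pb') auto
      then show False using pb'(5,6) a01(1) by simp
    qed
    then have "length qb' \<ge> 1" by linarith
    then show ?thesis using pa(6) by (simp add: es_def)
  qed
  then show ?thesis unfolding is_cycle_def using cp sv se by blast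
qed

lemma merge_multi_not_cycle:
  assumes mA: "is_multiedge A" and mB: "is_multiedge B"
  shows "\<not> is_cycle (merge_graphs A B n)"
proof
  let ?M = "merge_graphs A B n"
  assume "is_cycle ?M"
  then obtain vs es where c: "closed_path ?M vs es" "set es = edges ?M" "length es \<ge> 3"
    by (auto simp: is_cycle_def)
  have w: "is_walk ?M vs es" using c(1) by (simp add: closed_path_def)
  have esne: "es \<noteq> []" using c(3) by auto
  have all: "ends ?M e = verts A \<or> ends ?M e = verts B" if "e \<in> edges ?M" for e
    using that mA mB by (auto simp: merge_graphs_def is_multiedge_def)
  have e: "ends ?M (es ! i) = {vs ! i, vs ! Suc i}" "es ! i \<in> edges ?M" if "i < length es" for i
    using w that c(2) by (auto simp: is_walk_def)
  note ix = closed_idx[OF c(1)]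
  let ?k = "length es"
  have d12: "vs ! 1 \<noteq> vs ! 2" "vs ! 1 \<noteq> vs ! 3" "vs ! 2 \<noteq> vs ! 3" using ix(2)[of 1 2] ix(2)[of 1 3] ix(2)[of 2 3] c(3) by auto
  have d0: "vs ! 0 \<noteq> vs ! 1 \<and> vs ! 0 \<noteq> vs ! 2"
  proof (cases "?k = 3")
    case True then show ?thesis using ix(1) d12 by simp
  next
    case False
    have "vs ! ?k \<noteq> vs ! 1" using ix(2)[of ?k 1] c(3) esne by simp
    moreover have "vs ! ?k \<noteq> vs ! 2" using ix(2)[of ?k 2] c(3) False esne by simp
    ultimately show ?thesis using ix(1) by simp
  qed
  have s0: "ends ?M (es ! 0) = {vs ! 0, vs ! 1}" and s1: "ends ?M (es ! 1) = {vs ! 1, vs ! 2}"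
    and s2: "ends ?M (es ! 2) = {vs ! 2, vs ! 3}" using e(1)[of 0] e(1)[of 1] e(1)[of 2] c(3) esne by (auto simp: numeral_2_eq_2 numeral_3_eq_3)
  have m0: "es ! 0 \<in> edges ?M" and m1: "es ! 1 \<in> edges ?M" and m2: "es ! 2 \<in> edges ?M" using e(2)[of 0] e(2)[of 1] e(2)[of 2] c(3) esne by auto
  have n01: "{vs ! 0, vs ! 1} \<noteq> {vs ! 1, vs ! 2}" using d0 by (auto simp: doubleton_eq_iff)
  have n02: "{vs ! 0, vs ! 1} \<noteq> {vs ! 2, vs ! 3}" using d12 by (auto simp: doubleton_eq_iff)
  have n12: "{vs ! 1, vs ! 2} \<noteq> {vs ! 2, vs ! 3}" using d12 by (auto simp: doubleton_eq_iff)
  show False using all[OF m0] all[OF m1] all[OF m2] s0 s1 s2 n01 n02 n12 by metis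
qed

lemma cycle_bad:
  assumes cH: "is_cycle H" and h: "h \<in> edges H" "ends H h = {x, y}"
  shows "\<exists>c\<in>verts H. c \<notin> {x, y} \<and> \<not> reach H (edges H - {h}) (verts H - {c}) x y"
proof -
  obtain vs es where c: "closed_path H vs es" "set vs = verts H" "set es = edges H" "length es \<ge> 3" "last es = h"
    using cycle_rot[OF cH h(1)] by blast
  have w: "is_walk H vs es" using c(1) by (simp add: closed_path_def)
  have l: "length vs = Suc (length es)" using w by (simp add: is_walk_def)
  let ?k = "length es"
  note ix = closed_idx[OF c(1)]
  have e: "ends H (es ! i) = {vs ! i, vs ! Suc i}" if "i < ?k" for i using w that by (simp add: is_walk_def)
  have esne: "es \<noteq> []" using c(4) by auto
  have hk: "es ! (?k - 1) = h" using c(5) esne by (simp add: last_conv_nth)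
  have sk: "Suc (?k - 1) = ?k" using c(4) by simp
  have eh: "ends H h = {vs ! (?k - 1), vs ! 0}" using e[of "?k - 1"] hk ix(1) c(4) sk by simp
  have d: "vs ! 1 \<noteq> vs ! 0" "vs ! 1 \<noteq> vs ! (?k - 1)" "vs ! (?k - 1) \<noteq> vs ! 0"
  proof -
    have "vs ! 1 \<noteq> vs ! ?k" using ix(2)[of 1 ?k] c(4) esne by simp
    moreover have "vs ! 1 \<noteq> vs ! (?k - 1)" using ix(2)[of 1 "?k - 1"] c(4) esne by simp
    moreover have "vs ! (?k - 1) \<noteq> vs ! ?k" using ix(2)[of "?k - 1" ?k] c(4) esne by simp
    ultimately show "vs ! 1 \<noteq> vs ! 0" "vs ! 1 \<noteq> vs ! (?k - 1)" "vs ! (?k - 1) \<noteq> vs ! 0"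
      using ix(1) by simp_all
  qed
  have xy: "{x, y} = {vs ! (?k - 1), vs ! 0}" using eh h(2) by simp
  let ?c = "vs ! 1"
  have cV: "?c \<in> verts H"
  proof -
    have "1 < length vs" using l c(4) by linarith
    then show ?thesis using c(2) nth_mem by blast
  qed
  have at0: "j = 0 \<or> j = ?k - 1" if "j < ?k" "vs ! 0 \<in> ends H (es ! j)" for j
  proof -
    have "vs ! 0 = vs ! j \<or> vs ! 0 = vs ! Suc j" using e[OF that(1)] that(2) by auto
    then show ?thesis
    proof
      assume "vs ! 0 = vs ! j"
      then show ?thesis using ix(1) ix(2)[of ?k j] that(1) esne by (cases "j = 0") auto
    next
      assume "vs ! 0 = vs ! Suc j"
      then show ?thesis using ix(1) ix(2)[of ?k "Suc j"] that(1) esne by auto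
    qed
  qed
  have only0: "b = vs ! 0" if "reach H (edges H - {h}) (verts H - {?c}) (vs ! 0) b" for b
  proof -
    have "b \<in> {vs ! 0}"
    proof (rule reach_closed[OF that])
      show "vs ! 0 \<in> {vs ! 0}" by simp
    next
      fix s f q assume hyp: "s \<in> {vs ! 0}" "f \<in> edges H - {h}" "f \<in> edges H" "ends H f = {s, q}" "q \<in> verts H - {?c}" "q \<in> verts H"
      obtain j where j: "j < ?k" "es ! j = f" using hyp(3) c(3) by (metis in_set_conv_nth)
      have "j = 0 \<or> j = ?k - 1" using at0[OF j(1)] j(2) hyp(1,4) by auto
      then have "j = 0" using j(2) hk hyp(2) by auto
      then have "{vs ! 0, q} = {vs ! 0, vs ! 1}" using e[of 0] j hyp(1,4) by auto
      then have "q = vs ! 1" using d(1) by (auto simp: doubleton_eq_iff)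
      then show "q \<in> {vs ! 0}" using hyp(5) by simp
    qed
    then show ?thesis by simp
  qed
  have "\<not> reach H (edges H - {h}) (verts H - {?c}) x y"
  proof
    assume r: "reach H (edges H - {h}) (verts H - {?c}) x y"
    from xy have "(x = vs ! (?k - 1) \<and> y = vs ! 0) \<or> (x = vs ! 0 \<and> y = vs ! (?k - 1))" by (auto simp: doubleton_eq_iff)
    then show False
    proof
      assume "x = vs ! (?k - 1) \<and> y = vs ! 0"
      then show False using only0 reach_sym[OF r] d(3) by simp
    next
      assume "x = vs ! 0 \<and> y = vs ! (?k - 1)"
      then show False using only0 r d(3) by simp
    qed
  qed
  moreover have "?c \<notin> {x, y}" using xy d by auto
  ultimately show ?thesis using cV by blast
qed

lemma embed_simps:
  "verts (embed_graph G) = verts G" "edges (embed_graph G) = Inl ` edges G"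
  "ends (embed_graph G) (Inl e) = ends G e"
  by (simp_all add: embed_graph_def)

lemma reach_embed_to:
  assumes "reach G E A a b" shows "reach (embed_graph G) (Inl ` E) A a b"
  using assms
proof (induction rule: reach.induct)
  case (rrefl a) then show ?case by (intro reach.rrefl) (simp_all add: embed_simps)
next
  case (rstep a b f c)
  show ?case by (rule reach.rstep[OF rstep.IH, where f="Inl f"]) (use rstep.hyps in \<open>simp_all add: embed_simps\<close>)
qed

lemma reach_embed_from:
  assumes "reach (embed_graph G) E A a b" shows "reach G {e. Inl e \<in> E} A a b"
  using assms
proof (induction rule: reach.induct)
  case (rrefl a) then show ?case by (intro reach.rrefl) (simp_all add: embed_simps)
next
  case (rstep a b f c)
  then obtain e where e: "f = Inl e" "e \<in> edges G" by (auto simp: embed_simps)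
  show ?case by (rule reach.rstep[OF rstep.IH, where f=e]) (use rstep.hyps e in \<open>simp_all add: embed_simps\<close>)
qed

lemma embed_wf: "wf_graph G \<Longrightarrow> wf_graph (embed_graph G)"
  by (auto simp: wf_graph_def embed_simps)

lemma embed_biconnected:
  assumes "biconnected G" shows "biconnected (embed_graph G)"
proof -
  have c: "reach (embed_graph G) (edges (embed_graph G)) A a b" if "reach G (edges G) A a b" for A a b
    using reach_embed_to[OF that] by (simp add: embed_simps)
  show ?thesis using assms c unfolding biconnected_reach connected_reach embed_simps by blast
qed

lemma split_stepE:
  assumes "split_step D D'"
  obtains H u v F n where "H \<in> D" "biconnected H" "sep_split_set H u v F" "\<forall>H'\<in>D. Inr n \<notin> edges H'"
    "D' = (D - {H}) \<union> {split_piece H u v F n, split_piece H u v (edges H - F) n}"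
  using assms unfolding split_step_def by blast

definition real_ok :: "('v, 'e) mgraph \<Rightarrow> ('v, 'e + nat) mgraph \<Rightarrow> bool" where
  "real_ok G H \<longleftrightarrow> (\<forall>e. Inl e \<in> edges H \<longrightarrow> e \<in> edges G \<and> ends H (Inl e) = ends G e)"

definition pb_ok :: "('v, 'e) mgraph \<Rightarrow> ('v, 'e + nat) mgraph \<Rightarrow> bool" where
  "pb_ok G H \<longleftrightarrow> (\<forall>e c x y. Inl e \<in> edges H \<longrightarrow> ends H (Inl e) = {x, y} \<longrightarrow> c \<in> verts H \<longrightarrow> c \<notin> {x, y} \<longrightarrow>
     \<not> reach H (edges H - {Inl e}) (verts H - {c}) x y \<longrightarrow> \<not> reach G (edges G - {e}) (verts G - {c}) x y)"

definition SInv :: "('v, 'e) mgraph \<Rightarrow> ('v, 'e + nat) mgraph set \<Rightarrow> bool" where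
  "SInv G D \<longleftrightarrow> (\<forall>H\<in>D. wf_graph H \<and> biconnected H \<and> verts H \<subseteq> verts G \<and> real_ok G H \<and> pb_ok G H)"

lemma piece_ends_other: "g \<noteq> Inr n \<Longrightarrow> ends (split_piece H u v F n) g = ends H g"
  by (simp add: piece_simps)

lemma piece_SInv:
  assumes wf: "wf_graph H" and bc: "biconnected H" and s: "sep_split_set H u v F" and fresh: "Inr n \<notin> edges H"
    and vs: "verts H \<subseteq> verts G" and ro: "real_ok G H" and pb: "pb_ok G H"
  shows "wf_graph (split_piece H u v F n) \<and> biconnected (split_piece H u v F n) \<and>
    verts (split_piece H u v F n) \<subseteq> verts G \<and> real_ok G (split_piece H u v F n) \<and> pb_ok G (split_piece H u v F n)"
proof -
  let ?P = "split_piece H u v F n"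
  have FE: "F \<subseteq> edges H" using sep_split_basic(4)[OF s] .
  have ro': "real_ok G ?P" using ro FE unfolding real_ok_def by (auto simp: piece_simps)
  have pb': "pb_ok G ?P" unfolding pb_ok_def
  proof (intro allI impI)
    fix e c x y
    assume h: "Inl e \<in> edges ?P" "ends ?P (Inl e) = {x, y}" "c \<in> verts ?P" "c \<notin> {x, y}"
      "\<not> reach ?P (edges ?P - {Inl e}) (verts ?P - {c}) x y"
    have eF: "Inl e \<in> F" using h(1) by (simp add: piece_simps)
    have eH: "ends H (Inl e) = {x, y}" using h(2) by (simp add: piece_simps)
    have cH: "c \<in> verts H" using h(3) piece_verts_sub[OF wf s] by auto
    have xP: "x \<in> verts ?P" "y \<in> verts ?P" using eF eH by (auto simp: piece_simps)
    have "\<not> reach H (edges H - {Inl e}) (verts H - {c}) x y"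
    proof
      assume "reach H (edges H - {Inl e}) (verts H - {c}) x y"
      from project[OF wf s fresh this xP(1)] xP(2)
      have "reach ?P (((edges H - {Inl e}) \<inter> F) \<union> {Inr n}) (verts H - {c}) x y" by blast
      then have "reach ?P (edges ?P - {Inl e}) (verts ?P - {c}) x y" by (rule reach_mono) (auto simp: piece_simps)
      then show False using h(5) by simp
    qed
    then show "\<not> reach G (edges G - {e}) (verts G - {c}) x y"
      using pb eF FE eH cH h(4) unfolding pb_ok_def by blast
  qed
  show ?thesis using piece_wf[OF wf s] piece_biconnected[OF wf bc s fresh] piece_verts_sub[OF wf s] vs ro' pb'
    by blast
qed

lemma SInv_step:
  assumes "split_step D D'" "SInv G D"
  shows "SInv G D'"
proof -
  obtain H u v F n where h: "H \<in> D" "biconnected H" "sep_split_set H u v F" "\<forall>H'\<in>D. Inr n \<notin> edges H'"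
    "D' = (D - {H}) \<union> {split_piece H u v F n, split_piece H u v (edges H - F) n}"
    using split_stepE[OF assms(1)] by blast
  have H: "wf_graph H" "biconnected H" "verts H \<subseteq> verts G" "real_ok G H" "pb_ok G H"
    using assms(2) h(1) by (auto simp: SInv_def)
  have fresh: "Inr n \<notin> edges H" using h(1,4) by blast
  note p1 = piece_SInv[OF H(1,2) h(3) fresh H(3,4,5)]
  note p2 = piece_SInv[OF H(1,2) sep_split_sym[OF h(3)] fresh H(3,4,5)]
  show ?thesis using assms(2) h(5) p1 p2 unfolding SInv_def by blast
qed

lemma SInv_init:
  assumes "wf_graph G" "biconnected G"
  shows "SInv G {embed_graph G}"
proof -
  have pb: "pb_ok G (embed_graph G)" unfolding pb_ok_def
  proof (intro allI impI notI)
    fix e c x y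
    assume h: "Inl e \<in> edges (embed_graph G)" "\<not> reach (embed_graph G) (edges (embed_graph G) - {Inl e}) (verts (embed_graph G) - {c}) x y"
      "reach G (edges G - {e}) (verts G - {c}) x y"
    have "reach (embed_graph G) (Inl ` (edges G - {e})) (verts G - {c}) x y" using reach_embed_to[OF h(3)] .
    then have "reach (embed_graph G) (edges (embed_graph G) - {Inl e}) (verts (embed_graph G) - {c}) x y"
      by (rule reach_mono) (auto simp: embed_simps)
    then show False using h(2) by simp
  qed
  show ?thesis unfolding SInv_def using embed_wf[OF assms(1)] embed_biconnected[OF assms(2)] pb
    by (auto simp: real_ok_def embed_simps)
qed

lemma SInv_reach:
  assumes "split_step\<^sup>*\<^sup>* {embed_graph G} D" "wf_graph G" "biconnected G"
  shows "SInv G D"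
  using assms(1)
proof (induction rule: rtranclp_induct)
  case base then show ?case using SInv_init[OF assms(2,3)] .
next
  case (step D D') then show ?case using SInv_step by blast
qed

lemma bad_split:
  assumes wf: "wf_graph H" and bc: "biconnected H" and s: "sep_split_set H u v F" and fresh: "Inr n \<notin> edges H"
    and eF: "Inl e \<in> F" and exy: "ends H (Inl e) = {x, y}" and c: "c \<in> verts H" "c \<notin> {x, y}"
    and nr: "\<not> reach H (edges H - {Inl e}) (verts H - {c}) x y"
  shows "\<exists>c'\<in>verts (split_piece H u v F n). c' \<notin> {x, y} \<and>
    \<not> reach (split_piece H u v F n) (edges (split_piece H u v F n) - {Inl e}) (verts (split_piece H u v F n) - {c'}) x y"
proof -
  let ?P = "split_piece H u v F n" and ?K = "edges H - F"
  note b = sep_split_basic[OF s]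
  note sK = sep_split_sym[OF s]
  have Ksub: "\<Union>(ends H ` ?K) \<subseteq> verts H" using wf by (auto simp: wf_graph_def)
  obtain k where k: "k \<in> ?K" using b(6) by (metis all_not_in_conv card.empty not_numeral_le_zero)
  have uvP: "u \<in> verts ?P" "v \<in> verts ?P" by (auto simp: piece_simps)
  show ?thesis
  proof (cases "c \<in> verts ?P")
    case True
    have "\<not> reach ?P (edges ?P - {Inl e}) (verts ?P - {c}) x y"
    proof
      assume rP: "reach ?P (edges ?P - {Inl e}) (verts ?P - {c}) x y"
      have "reach H (edges H - {Inl e}) (verts H - {c}) x y"
      proof (rule lift[OF wf s fresh rP])
        assume uv: "u \<in> verts ?P - {c}" "v \<in> verts ?P - {c}"
        have cK: "c \<notin> \<Union>(ends H ` ?K)"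
        proof
          assume "c \<in> \<Union>(ends H ` ?K)"
          then obtain k' where "k' \<in> ?K" "c \<in> ends H k'" by auto
          then have "c \<in> {u, v}" using piece_shared[OF wf s _ _ _ True] by auto
          then show False using uv by auto
        qed
        have "reach H ({g \<in> ?K. ends H g \<noteq> {u, v}} \<union> {k}) (\<Union>(ends H ` ?K)) u v"
          using side_connects[OF wf bc sK k] by simp
        then show "reach H (edges H - {Inl e}) (verts H - {c}) u v"
          by (rule reach_mono) (use k eF cK Ksub in auto)
      next
        show "(edges ?P - {Inl e}) \<inter> F \<subseteq> edges H - {Inl e}" using b(4) by auto
        show "verts ?P - {c} \<subseteq> verts H - {c}" using piece_verts_sub[OF wf s] by auto
      qed
      then show False using nr by simp
    qed
    then show ?thesis using True c(2) by blast
  next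
    case False
    show ?thesis
    proof (cases "u \<notin> {x, y} \<or> v \<notin> {x, y}")
      case True
      then obtain c' where c': "c' \<in> {u, v}" "c' \<notin> {x, y}" by auto
      have "\<not> reach ?P (edges ?P - {Inl e}) (verts ?P - {c'}) x y"
      proof
        assume rP: "reach ?P (edges ?P - {Inl e}) (verts ?P - {c'}) x y"
        have "reach H (edges H - {Inl e}) (verts H - {c}) x y"
        proof (rule lift[OF wf s fresh rP])
          assume uv: "u \<in> verts ?P - {c'}" "v \<in> verts ?P - {c'}"
          then show "reach H (edges H - {Inl e}) (verts H - {c}) u v" using c'(1) by auto
        next
          show "(edges ?P - {Inl e}) \<inter> F \<subseteq> edges H - {Inl e}" using b(4) by auto
          show "verts ?P - {c'} \<subseteq> verts H - {c}" using piece_verts_sub[OF wf s] False by auto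
        qed
        then show False using nr by simp
      qed
      then show ?thesis using c' uvP by blast
    next
      case False2: False
      then have xyuv: "{x, y} = {u, v}" using b(3) by auto
      obtain f where f: "f \<in> F" "f \<noteq> Inl e"
      proof -
        have "F \<noteq> {Inl e}" using b(5) by auto
        then show ?thesis using that eF by blast
      qed
      have "reach H ({g \<in> F. ends H g \<noteq> {u, v}} \<union> {f}) (\<Union>(ends H ` F)) u v"
        using side_connects[OF wf bc s f(1)] .
      then have r: "reach H (edges H - {Inl e}) (verts H - {c}) u v"
      proof (rule reach_mono)
        show "({g \<in> F. ends H g \<noteq> {u, v}} \<union> {f}) \<inter> edges H \<subseteq> edges H - {Inl e}"
          using f exy xyuv by auto
        show "\<Union>(ends H ` F) \<inter> verts H \<subseteq> verts H - {c}" using False by (auto simp: piece_simps)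
      qed
      have "reach H (edges H - {Inl e}) (verts H - {c}) x y"
        using xyuv r reach_sym[OF r] by (auto simp: doubleton_eq_iff)
      then show ?thesis using nr by simp
    qed
  qed
qed

definition Bad :: "'e \<Rightarrow> 'v \<Rightarrow> 'v \<Rightarrow> ('v, 'e + nat) mgraph set \<Rightarrow> bool" where
  "Bad e x y D \<longleftrightarrow> (\<exists>H\<in>D. Inl e \<in> edges H \<and> ends H (Inl e) = {x, y} \<and>
     (\<exists>c\<in>verts H. c \<notin> {x, y} \<and> \<not> reach H (edges H - {Inl e}) (verts H - {c}) x y))"

lemma Bad_step:
  assumes "split_step D D'" "SInv G D" "Bad e x y D"
  shows "Bad e x y D'"
proof -
  obtain H u v F n where h: "H \<in> D" "biconnected H" "sep_split_set H u v F" "\<forall>H'\<in>D. Inr n \<notin> edges H'"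
    "D' = (D - {H}) \<union> {split_piece H u v F n, split_piece H u v (edges H - F) n}"
    using split_stepE[OF assms(1)] by blast
  have wf: "wf_graph H" using assms(2) h(1) by (auto simp: SInv_def)
  have fresh: "Inr n \<notin> edges H" using h(1,4) by blast
  obtain B c where B: "B \<in> D" "Inl e \<in> edges B" "ends B (Inl e) = {x, y}" "c \<in> verts B" "c \<notin> {x, y}"
    "\<not> reach B (edges B - {Inl e}) (verts B - {c}) x y"
    using assms(3) unfolding Bad_def by blast
  show ?thesis
  proof (cases "B = H")
    case False
    then show ?thesis using B h(5) unfolding Bad_def by blast
  next
    case True
    show ?thesis
    proof (cases "Inl e \<in> F")
      case eF: True
      from bad_split[OF wf h(2,3) fresh eF] B True
      obtain c' where "c' \<in> verts (split_piece H u v F n)" "c' \<notin> {x, y}"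
        "\<not> reach (split_piece H u v F n) (edges (split_piece H u v F n) - {Inl e}) (verts (split_piece H u v F n) - {c'}) x y"
        by blast
      moreover have "Inl e \<in> edges (split_piece H u v F n)" "ends (split_piece H u v F n) (Inl e) = {x, y}"
        using eF B True by (auto simp: piece_simps)
      ultimately show ?thesis using h(5) unfolding Bad_def by blast
    next
      case eF: False
      then have eK: "Inl e \<in> edges H - F" using B True by simp
      from bad_split[OF wf h(2) sep_split_sym[OF h(3)] fresh eK] B True
      obtain c' where "c' \<in> verts (split_piece H u v (edges H - F) n)" "c' \<notin> {x, y}"
        "\<not> reach (split_piece H u v (edges H - F) n) (edges (split_piece H u v (edges H - F) n) - {Inl e}) (verts (split_piece H u v (edges H - F) n) - {c'}) x y"
        by blast
      moreover have "Inl e \<in> edges (split_piece H u v (edges H - F) n)" "ends (split_piece H u v (edges H - F) n) (Inl e) = {x, y}"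
        using eK B True by (auto simp: piece_simps)
      ultimately show ?thesis using h(5) unfolding Bad_def by blast
    qed
  qed
qed

lemma Bad_reach:
  assumes "split_step\<^sup>*\<^sup>* {embed_graph G} D" "wf_graph G" "biconnected G" "Bad e x y {embed_graph G}"
  shows "Bad e x y D"
  using assms(1)
proof (induction rule: rtranclp_induct)
  case base then show ?case using assms(4) .
next
  case (step D D')
  have "SInv G D" using SInv_reach[OF step.hyps(1) assms(2,3)] .
  then show ?case using Bad_step[OF step.hyps(2) _ step.IH] by blast
qed

definition Rl :: "('e + nat) set \<Rightarrow> 'e set" where "Rl X = {e. Inl e \<in> X}"
definition Lb :: "('e + nat) set \<Rightarrow> nat set" where "Lb X = {m. Inr m \<in> X}"
definition Vx :: "('v, 'e) mgraph \<Rightarrow> 'e set \<Rightarrow> 'v set" where "Vx G X = \<Union>(ends G ` X)"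
definition sideset :: "(nat \<Rightarrow> 'e set) \<Rightarrow> ('e + nat) set \<Rightarrow> 'e set" where
  "sideset b X = Rl X \<union> \<Union>(b ` Lb X)"

definition MIself :: "('v, 'e) mgraph \<Rightarrow> ('v, 'e + nat) mgraph \<Rightarrow> (nat \<Rightarrow> 'e set) \<Rightarrow> bool" where
  "MIself G H b \<longleftrightarrow> wf_graph H \<and> real_ok G H \<and> sideset b (edges H) = edges G \<and>
     (\<forall>m\<in>Lb (edges H). Rl (edges H) \<inter> b m = {}) \<and>
     (\<forall>m\<in>Lb (edges H). \<forall>m'\<in>Lb (edges H). m \<noteq> m' \<longrightarrow> b m \<inter> b m' = {}) \<and>
     (\<forall>m\<in>Lb (edges H). Vx G (b m) \<inter> Vx G (edges G - b m) \<subseteq> ends H (Inr m)) \<and>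
     (\<forall>m\<in>Lb (edges H). verts H - ends H (Inr m) \<subseteq> Vx G (edges G - b m)) \<and>
     (\<forall>m\<in>Lb (edges H). ends H (Inr m) \<subseteq> Vx G (b m))"

definition MI :: "('v, 'e) mgraph \<Rightarrow> ('v, 'e + nat) mgraph set \<Rightarrow> (('v, 'e + nat) mgraph \<Rightarrow> nat \<Rightarrow> 'e set) \<Rightarrow> bool" where
  "MI G S \<beta> \<longleftrightarrow> (\<forall>H\<in>S. MIself G H (\<beta> H)) \<and>
     (\<forall>H1\<in>S. \<forall>H2\<in>S. H1 \<noteq> H2 \<longrightarrow> (\<forall>m\<in>Lb (edges H1) \<inter> Lb (edges H2).
        \<beta> H1 m = edges G - \<beta> H2 m \<and> ends H1 (Inr m) = ends H2 (Inr m)))"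

lemma Rl_simps: "Rl (X \<union> Y) = Rl X \<union> Rl Y" "Rl (X - Y) = Rl X - Rl Y" "Rl {Inr n} = {}" "Rl {} = {}"
  by (auto simp: Rl_def)
lemma Lb_simps: "Lb (X \<union> Y) = Lb X \<union> Lb Y" "Lb (X - Y) = Lb X - Lb Y" "Lb {Inr n} = {n}" "Lb {} = {}"
  by (auto simp: Lb_def)

lemma sideset_union: "sideset b (X \<union> Y) = sideset b X \<union> sideset b Y"
  by (auto simp: sideset_def Rl_simps Lb_simps)

lemma sideset_mono: "X \<subseteq> Y \<Longrightarrow> sideset b X \<subseteq> sideset b Y"
  by (auto simp: sideset_def Rl_def Lb_def)

lemma Vx_mono: "X \<subseteq> Y \<Longrightarrow> Vx G X \<subseteq> Vx G Y"
  by (auto simp: Vx_def)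

lemma Vx_union: "Vx G (X \<union> Y) = Vx G X \<union> Vx G Y"
  by (auto simp: Vx_def)

lemma MIself_D:
  assumes "MIself G H b"
  shows "wf_graph H" "real_ok G H" "sideset b (edges H) = edges G"
    "\<And>m. m \<in> Lb (edges H) \<Longrightarrow> Rl (edges H) \<inter> b m = {}"
    "\<And>m m'. m \<in> Lb (edges H) \<Longrightarrow> m' \<in> Lb (edges H) \<Longrightarrow> m \<noteq> m' \<Longrightarrow> b m \<inter> b m' = {}"
    "\<And>m. m \<in> Lb (edges H) \<Longrightarrow> Vx G (b m) \<inter> Vx G (edges G - b m) \<subseteq> ends H (Inr m)"
    "\<And>m. m \<in> Lb (edges H) \<Longrightarrow> verts H - ends H (Inr m) \<subseteq> Vx G (edges G - b m)"
    "\<And>m. m \<in> Lb (edges H) \<Longrightarrow> ends H (Inr m) \<subseteq> Vx G (b m)"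
  using assms unfolding MIself_def by blast+

lemma MIself_sub:
  assumes "MIself G H b" "X \<subseteq> edges H"
  shows "sideset b X \<subseteq> edges G"
  using sideset_mono[OF assms(2), of b] MIself_D(3)[OF assms(1)] by blast

lemma MIself_b_sub:
  assumes "MIself G H b" "m \<in> Lb (edges H)"
  shows "b m \<subseteq> edges G"
  using MIself_D(3)[OF assms(1)] assms(2) by (auto simp: sideset_def)

lemma MIself_split_disj:
  assumes mi: "MIself G H b" and XY: "X \<subseteq> edges H" "Y \<subseteq> edges H" "X \<inter> Y = {}"
  shows "sideset b X \<inter> sideset b Y = {}"
proof -
  have "e \<notin> sideset b Y" if e: "e \<in> sideset b X" for e
  proof
    assume eY: "e \<in> sideset b Y"
    have RX: "Rl X \<subseteq> Rl (edges H)" "Lb X \<subseteq> Lb (edges H)" "Rl Y \<subseteq> Rl (edges H)" "Lb Y \<subseteq> Lb (edges H)"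
      using XY by (auto simp: Rl_def Lb_def)
    have d1: "Rl X \<inter> Rl Y = {}" "Lb X \<inter> Lb Y = {}" using XY(3) by (auto simp: Rl_def Lb_def)
    from e eY show False unfolding sideset_def
    proof (elim UnE UN_E)
      assume "e \<in> Rl X" "e \<in> Rl Y" then show False using d1 by auto
    next
      fix m assume "m \<in> Lb Y" "e \<in> b m" "e \<in> Rl X"
      then show False using MIself_D(4)[OF mi, of m] RX by auto
    next
      fix m assume "m \<in> Lb X" "e \<in> b m" "e \<in> Rl Y"
      then show False using MIself_D(4)[OF mi, of m] RX by auto
    next
      fix m m'
      assume h: "m \<in> Lb X" "e \<in> b m" "m' \<in> Lb Y" "e \<in> b m'"
      then have "m \<noteq> m'" using d1 by auto
      moreover have "m \<in> Lb (edges H)" "m' \<in> Lb (edges H)" using h RX by auto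
      ultimately show False using MIself_D(5)[OF mi, of m m'] h by auto
    qed
  qed
  then show ?thesis by blast
qed

lemma MIself_compl:
  assumes mi: "MIself G H b" and F: "F \<subseteq> edges H"
  shows "sideset b (edges H - F) = edges G - sideset b F"
proof -
  have u: "sideset b F \<union> sideset b (edges H - F) = edges G"
  proof -
    have "F \<union> (edges H - F) = edges H" using F by blast
    then show ?thesis using MIself_D(3)[OF mi] sideset_union[of b F "edges H - F"] by simp
  qed
  have d: "sideset b F \<inter> sideset b (edges H - F) = {}" using MIself_split_disj[OF mi F] by blast
  show ?thesis using u d by blast
qed

lemma MIself_vx_side:
  assumes mi: "MIself G H b" and X: "X \<subseteq> edges H" and z: "z \<in> Vx G (sideset b X)" "z \<in> Vx G Z"
    and Z: "Z \<subseteq> edges G" "Z \<inter> sideset b X = {}"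
  shows "z \<in> \<Union>(ends H ` X)"
proof -
  from z(1) obtain e where e: "e \<in> sideset b X" "z \<in> ends G e" by (auto simp: Vx_def)
  from e(1) show ?thesis unfolding sideset_def
  proof (elim UnE UN_E)
    assume "e \<in> Rl X"
    then have "Inl e \<in> X" by (simp add: Rl_def)
    moreover have "ends H (Inl e) = ends G e" using MIself_D(2)[OF mi] \<open>Inl e \<in> X\<close> X by (auto simp: real_ok_def)
    ultimately show ?thesis using e(2) by blast
  next
    fix m assume m: "m \<in> Lb X" "e \<in> b m"
    have mH: "m \<in> Lb (edges H)" using m X by (auto simp: Lb_def)
    have "b m \<subseteq> sideset b X" using m(1) by (auto simp: sideset_def)
    then have "Z \<subseteq> edges G - b m" using Z by blast
    then have "z \<in> Vx G (edges G - b m)" using z(2) Vx_mono[OF \<open>Z \<subseteq> edges G - b m\<close>, of G] by blast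
    moreover have "z \<in> Vx G (b m)" using m e(2) by (auto simp: Vx_def)
    ultimately have "z \<in> ends H (Inr m)" using MIself_D(6)[OF mi mH] by blast
    then show ?thesis using m(1) by (auto simp: Lb_def)
  qed
qed

lemma MIself_end_vx:
  assumes mi: "MIself G H b" and X: "X \<subseteq> edges H" and f: "f \<in> X" "z \<in> ends H f"
  shows "z \<in> Vx G (sideset b X)"
proof (cases f)
  case (Inl e)
  then have "ends H f = ends G e" using MIself_D(2)[OF mi] f X by (auto simp: real_ok_def)
  moreover have "e \<in> sideset b X" using f Inl by (auto simp: sideset_def Rl_def)
  ultimately show ?thesis using f(2) by (auto simp: Vx_def)
next
  case (Inr m)
  then have mH: "m \<in> Lb (edges H)" using f X by (auto simp: Lb_def)
  have "z \<in> Vx G (b m)" using MIself_D(8)[OF mi mH] f(2) Inr by auto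
  moreover have "b m \<subseteq> sideset b X" using f Inr by (auto simp: sideset_def Lb_def)
  ultimately show ?thesis using Vx_mono[of "b m" "sideset b X" G] by blast
qed

lemma sideset_upd: "n \<notin> Lb X \<Longrightarrow> sideset (b(n := Y)) X = sideset b X"
  unfolding sideset_def by auto

lemma sideset_single: "sideset b {Inr n} = b n"
  by (simp add: sideset_def Rl_simps Lb_simps)

lemma piece_MIself:
  assumes wf: "wf_graph H" and bc: "biconnected H" and s: "sep_split_set H u v F" and fresh: "Inr n \<notin> edges H"
    and mi: "MIself G H b"
  shows "MIself G (split_piece H u v F n) (b(n := sideset b (edges H - F)))"
proof -
  let ?P = "split_piece H u v F n" and ?K = "edges H - F" and ?b = "b(n := sideset b (edges H - F))"
  note sb = sep_split_basic[OF s]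
  have FE: "F \<subseteq> edges H" using sb(4) .
  have eP: "edges ?P = F \<union> {Inr n}" by (simp add: piece_simps)
  have LbP: "Lb (edges ?P) = Lb F \<union> {n}" and RlP: "Rl (edges ?P) = Rl F" by (auto simp: eP Rl_def Lb_def)
  have nF: "n \<notin> Lb F" using fresh FE by (auto simp: Lb_def)
  have LbF: "Lb F \<subseteq> Lb (edges H)" "Rl F \<subseteq> Rl (edges H)" using FE by (auto simp: Lb_def Rl_def)
  have compl: "sideset b ?K = edges G - sideset b F" using MIself_compl[OF mi FE] .
  have sFsub: "sideset b F \<subseteq> edges G" using MIself_sub[OF mi FE] .
  have compl2: "edges G - sideset b ?K = sideset b F" using compl sFsub by blast
  have bmF: "b m \<subseteq> sideset b F" if "m \<in> Lb F" for m using that by (auto simp: sideset_def)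
  have RlF: "Rl F \<subseteq> sideset b F" by (auto simp: sideset_def)
  have bn: "?b n = sideset b ?K" by simp
  have bm: "?b m = b m" if "m \<in> Lb F" for m using that nF by auto
  have endsm: "ends ?P (Inr m) = ends H (Inr m)" if "m \<in> Lb F" for m using that nF by (auto simp: piece_simps)
  have endsn: "ends ?P (Inr n) = {u, v}" by (simp add: piece_simps)
  have vP: "verts ?P \<subseteq> verts H" using piece_verts_sub[OF wf s] .
  have c1: "wf_graph ?P" using piece_wf[OF wf s] .
  have c2: "real_ok G ?P" using MIself_D(2)[OF mi] FE unfolding real_ok_def by (auto simp: piece_simps)
  have c3: "sideset ?b (edges ?P) = edges G"
  proof -
    have "sideset ?b (edges ?P) = sideset ?b F \<union> sideset ?b {Inr n}" unfolding eP by (rule sideset_union)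
    also have "\<dots> = sideset b F \<union> sideset b ?K" using sideset_upd[OF nF] sideset_single[of ?b n] by simp
    also have "\<dots> = edges G" using compl sFsub by blast
    finally show ?thesis .
  qed
  have c4: "\<forall>m\<in>Lb (edges ?P). Rl (edges ?P) \<inter> ?b m = {}"
  proof
    fix m assume m: "m \<in> Lb (edges ?P)"
    show "Rl (edges ?P) \<inter> ?b m = {}"
    proof (cases "m = n")
      case True then show ?thesis using RlP compl RlF by auto
    next
      case False
      then have "m \<in> Lb F" using m LbP by auto
      then show ?thesis using MIself_D(4)[OF mi, of m] LbF RlP bm by auto
    qed
  qed
  have c5: "\<forall>m\<in>Lb (edges ?P). \<forall>m'\<in>Lb (edges ?P). m \<noteq> m' \<longrightarrow> ?b m \<inter> ?b m' = {}"
  proof (intro ballI impI)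
    fix m m' assume m: "m \<in> Lb (edges ?P)" "m' \<in> Lb (edges ?P)" "m \<noteq> m'"
    show "?b m \<inter> ?b m' = {}"
    proof (cases "m = n")
      case True
      then have "m' \<in> Lb F" using m LbP by auto
      then show ?thesis using True bmF[of m'] bm[of m'] compl by auto
    next
      case False
      then have mF: "m \<in> Lb F" using m LbP by auto
      show ?thesis
      proof (cases "m' = n")
        case True then show ?thesis using mF bmF[of m] bm[of m] compl by auto
      next
        case False
        then have "m' \<in> Lb F" using m LbP by auto
        then show ?thesis using MIself_D(5)[OF mi, of m m'] mF LbF m(3) bm by auto
      qed
    qed
  qed
  have c6: "\<forall>m\<in>Lb (edges ?P). Vx G (?b m) \<inter> Vx G (edges G - ?b m) \<subseteq> ends ?P (Inr m)"
  proof
    fix m assume m: "m \<in> Lb (edges ?P)"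
    show "Vx G (?b m) \<inter> Vx G (edges G - ?b m) \<subseteq> ends ?P (Inr m)"
    proof (cases "m = n")
      case True
      show ?thesis
      proof
        fix z assume z: "z \<in> Vx G (?b m) \<inter> Vx G (edges G - ?b m)"
        then have z1: "z \<in> Vx G (sideset b ?K)" and z2: "z \<in> Vx G (sideset b F)" using True compl2 by auto
        have "z \<in> \<Union>(ends H ` ?K)"
          by (rule MIself_vx_side[OF mi _ z1 z2]) (use sFsub compl in auto)
        moreover have "z \<in> \<Union>(ends H ` F)"
          by (rule MIself_vx_side[OF mi FE z2 z1]) (use compl in auto)
        ultimately have "z \<in> {u, v}" using split_shared[OF wf s] by blast
        then show "z \<in> ends ?P (Inr m)" using True endsn by simp
      qed
    next
      case False
      then have "m \<in> Lb F" using m LbP by auto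
      then show ?thesis using MIself_D(6)[OF mi, of m] LbF bm endsm by auto
    qed
  qed
  have c7: "\<forall>m\<in>Lb (edges ?P). verts ?P - ends ?P (Inr m) \<subseteq> Vx G (edges G - ?b m)"
  proof
    fix m assume m: "m \<in> Lb (edges ?P)"
    show "verts ?P - ends ?P (Inr m) \<subseteq> Vx G (edges G - ?b m)"
    proof (cases "m = n")
      case True
      show ?thesis
      proof
        fix z assume z: "z \<in> verts ?P - ends ?P (Inr m)"
        then obtain f where f: "f \<in> F" "z \<in> ends H f" using True endsn by (auto simp: piece_simps)
        have "z \<in> Vx G (sideset b F)" using MIself_end_vx[OF mi FE f] .
        then show "z \<in> Vx G (edges G - ?b m)" using True compl2 by simp
      qed
    next
      case False
      then have "m \<in> Lb F" using m LbP by auto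
      then have mF: "m \<in> Lb F" .
      then have "m \<in> Lb (edges H)" using LbF by auto
      then have A: "verts H - ends H (Inr m) \<subseteq> Vx G (edges G - b m)" by (rule MIself_D(7)[OF mi])
      show ?thesis using A vP bm[OF mF] endsm[OF mF] by auto
    qed
  qed
  have c8: "\<forall>m\<in>Lb (edges ?P). ends ?P (Inr m) \<subseteq> Vx G (?b m)"
  proof
    fix m assume m: "m \<in> Lb (edges ?P)"
    show "ends ?P (Inr m) \<subseteq> Vx G (?b m)"
    proof (cases "m = n")
      case True
      obtain k where k: "k \<in> ?K" using sb(6) by (metis all_not_in_conv card.empty not_numeral_le_zero)
      have "reach H ({g \<in> ?K. ends H g \<noteq> {u, v}} \<union> {k}) (\<Union>(ends H ` ?K)) u v"
        using side_connects[OF wf bc sep_split_sym[OF s] k] by simp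
      then have "u \<in> \<Union>(ends H ` ?K)" "v \<in> \<Union>(ends H ` ?K)" using reach_in by fast+
      then have "u \<in> Vx G (sideset b ?K)" "v \<in> Vx G (sideset b ?K)"
        using MIself_end_vx[OF mi, of ?K] by blast+
      then show ?thesis using True endsn by simp
    next
      case False
      then have "m \<in> Lb F" using m LbP by auto
      then have mF: "m \<in> Lb F" .
      then have "m \<in> Lb (edges H)" using LbF by auto
      then have A: "ends H (Inr m) \<subseteq> Vx G (b m)" by (rule MIself_D(8)[OF mi])
      show ?thesis using A bm[OF mF] endsm[OF mF] by auto
    qed
  qed
  show ?thesis unfolding MIself_def using c1 c2 c3 c4 c5 c6 c7 c8 by blast
qed

definition PR :: "('v, 'e) mgraph \<Rightarrow> ('v, 'e + nat) mgraph \<Rightarrow> (nat \<Rightarrow> 'e set) \<Rightarrow> ('v, 'e + nat) mgraph \<Rightarrow> (nat \<Rightarrow> 'e set) \<Rightarrow> bool" where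
  "PR G X1 b1 X2 b2 \<longleftrightarrow> (\<forall>m\<in>Lb (edges X1) \<inter> Lb (edges X2). b1 m = edges G - b2 m \<and> ends X1 (Inr m) = ends X2 (Inr m))"

lemma MI_alt: "MI G S \<beta> \<longleftrightarrow> (\<forall>H\<in>S. MIself G H (\<beta> H)) \<and> (\<forall>H1\<in>S. \<forall>H2\<in>S. H1 \<noteq> H2 \<longrightarrow> PR G H1 (\<beta> H1) H2 (\<beta> H2))"
  by (simp add: MI_def PR_def)

lemma pair_piece_other:
  assumes FE: "F \<subseteq> edges H" and freshY: "Inr n \<notin> edges Y" and pr1: "PR G H b Y bY" and pr2: "PR G Y bY H b"
  shows "PR G (split_piece H u v F n) (b(n := X)) Y bY \<and> PR G Y bY (split_piece H u v F n) (b(n := X))"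
proof -
  have key: "m \<noteq> n \<and> m \<in> Lb (edges H) \<and> ends (split_piece H u v F n) (Inr m) = ends H (Inr m)"
    if "m \<in> Lb (edges (split_piece H u v F n))" "m \<in> Lb (edges Y)" for m
    using that freshY FE by (auto simp: Lb_def piece_simps)
  show ?thesis using key pr1 pr2 unfolding PR_def by auto
qed

lemma MI_split:
  assumes st: "split_step D D'" and si: "SInv G D" and mi: "MI G D \<beta>"
  shows "\<exists>\<beta>'. MI G D' \<beta>'"
proof -
  obtain H u v F n where h: "H \<in> D" "biconnected H" "sep_split_set H u v F" "\<forall>H'\<in>D. Inr n \<notin> edges H'"
    "D' = (D - {H}) \<union> {split_piece H u v F n, split_piece H u v (edges H - F) n}"
    using split_stepE[OF st] by blast
  have wf: "wf_graph H" using si h(1) by (auto simp: SInv_def)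
  have fresh: "Inr n \<notin> edges H" using h(1,4) by blast
  note sb = sep_split_basic[OF h(3)]
  let ?K = "edges H - F" and ?b = "\<beta> H"
  let ?P1 = "split_piece H u v F n" and ?P2 = "split_piece H u v ?K n"
  let ?b1 = "?b(n := sideset ?b (edges H - F))" and ?b2 = "?b(n := sideset ?b (edges H - ?K))"
  have KK: "edges H - ?K = F" using sb(4) by blast
  have miH: "MIself G H ?b" using mi h(1) by (simp add: MI_def)
  have s1: "MIself G ?P1 ?b1" using piece_MIself[OF wf h(2,3) fresh miH] .
  have s2: "MIself G ?P2 ?b2" using piece_MIself[OF wf h(2) sep_split_sym[OF h(3)] fresh miH] .
  have P1D: "?P1 \<notin> D" and P2D: "?P2 \<notin> D" using h(4) by (auto simp: piece_simps)
  have P12: "?P1 \<noteq> ?P2"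
  proof
    obtain f where f: "f \<in> F" using sb(5) by (metis all_not_in_conv card.empty not_numeral_le_zero)
    assume "?P1 = ?P2"
    then have "edges ?P1 = edges ?P2" by simp
    then have "f \<in> ?K \<union> {Inr n}" using f by (auto simp: piece_simps)
    then show False using f fresh sb(4) by auto
  qed
  define \<beta>' where "\<beta>' = \<beta>(?P1 := ?b1, ?P2 := ?b2)"
  have b'1: "\<beta>' ?P1 = ?b1" and b'2: "\<beta>' ?P2 = ?b2" using P12 by (simp_all add: \<beta>'_def)
  have b'o: "\<beta>' X = \<beta> X" if "X \<in> D" for X using that P1D P2D by (auto simp: \<beta>'_def)
  have self: "\<forall>X\<in>D'. MIself G X (\<beta>' X)"
  proof
    fix X assume "X \<in> D'"
    then consider "X \<in> D" "X \<noteq> H" | "X = ?P1" | "X = ?P2" using h(5) by blast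
    then show "MIself G X (\<beta>' X)"
    proof cases
      case 1 then show ?thesis using mi b'o by (simp add: MI_def)
    qed (use s1 s2 b'1 b'2 in simp_all)
  qed
  have allp: "\<forall>H1\<in>D. \<forall>H2\<in>D. H1 \<noteq> H2 \<longrightarrow> PR G H1 (\<beta> H1) H2 (\<beta> H2)"
    using mi unfolding MI_alt by (rule conjunct2)
  have prHY: "PR G H ?b Y (\<beta> Y) \<and> PR G Y (\<beta> Y) H ?b" if "Y \<in> D" "Y \<noteq> H" for Y
  proof -
    have "H \<noteq> Y" using that by auto
    have 1: "PR G H ?b Y (\<beta> Y)" using bspec[OF bspec[OF allp h(1)] that(1)] \<open>H \<noteq> Y\<close> by (rule mp)
    have 2: "PR G Y (\<beta> Y) H ?b" using bspec[OF bspec[OF allp that(1)] h(1)] \<open>H \<noteq> Y\<close> by (simp add: eq_commute)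
    show ?thesis using 1 2 by (rule conjI)
  qed
  have p12: "PR G ?P1 ?b1 ?P2 ?b2 \<and> PR G ?P2 ?b2 ?P1 ?b1"
  proof -
    have LL: "Lb (edges ?P1) \<inter> Lb (edges ?P2) = {n}" "Lb (edges ?P2) \<inter> Lb (edges ?P1) = {n}"
      by (auto simp: piece_simps Lb_def)
    have c1: "sideset ?b ?K = edges G - sideset ?b F" using MIself_compl[OF miH sb(4)] .
    have sub: "sideset ?b F \<subseteq> edges G" using MIself_sub[OF miH sb(4)] .
    have e: "ends ?P1 (Inr n) = ends ?P2 (Inr n)" by (simp add: piece_simps)
    have c2: "sideset ?b F = edges G - (edges G - sideset ?b F)" using sub by blast
    show ?thesis unfolding PR_def LL using c1 c2 e KK by simp
  qed
  have pairs: "\<forall>X1\<in>D'. \<forall>X2\<in>D'. X1 \<noteq> X2 \<longrightarrow> PR G X1 (\<beta>' X1) X2 (\<beta>' X2)"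
  proof (intro ballI impI)
    fix X1 X2 assume x: "X1 \<in> D'" "X2 \<in> D'" "X1 \<noteq> X2"
    have c: "(X \<in> D \<and> X \<noteq> H) \<or> X = ?P1 \<or> X = ?P2" if "X \<in> D'" for X using that h(5) by blast
    have fY: "Inr n \<notin> edges Y" if "Y \<in> D" for Y using h(4) that by blast
    have oth1: "PR G ?P1 ?b1 Y (\<beta> Y) \<and> PR G Y (\<beta> Y) ?P1 ?b1" if "Y \<in> D" "Y \<noteq> H" for Y
      using pair_piece_other[OF sb(4) fY[OF that(1)]] prHY[OF that] by blast
    have oth2: "PR G ?P2 ?b2 Y (\<beta> Y) \<and> PR G Y (\<beta> Y) ?P2 ?b2" if "Y \<in> D" "Y \<noteq> H" for Y
      using pair_piece_other[of ?K H n Y G ?b "\<beta> Y" u v] fY[OF that(1)] prHY[OF that] by blast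
    from c[OF x(1)] c[OF x(2)] x(3) show "PR G X1 (\<beta>' X1) X2 (\<beta>' X2)"
    proof (elim disjE conjE)
      assume "X1 \<in> D" "X1 \<noteq> H" "X2 \<in> D" "X2 \<noteq> H"
      then show ?thesis using allp x(3) b'o by simp
    qed (use oth1 oth2 p12 b'1 b'2 b'o in auto)
  qed
  show ?thesis using self pairs unfolding MI_alt by blast
qed

lemma card_le2: "X \<subseteq> {a, b} \<Longrightarrow> card X \<le> 2"
proof -
  assume "X \<subseteq> {a, b}"
  then have "card X \<le> card {a, b}" by (intro card_mono) auto
  also have "\<dots> \<le> 2" by (cases "a = b") auto
  finally show ?thesis .
qed

lemma MI_pair:
  assumes mA: "MIself G A bA" and mB: "MIself G B bB"
    and pr1: "PR G A bA B bB" and pr2: "PR G B bB A bA"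
    and n: "n \<in> Lb (edges A)" "n \<in> Lb (edges B)" and cA: "card (edges A) \<ge> 3"
  shows "edges A \<inter> edges B = {Inr n}" "verts A \<inter> verts B \<subseteq> ends A (Inr n)"
proof -
  let ?EG = "edges G"
  have nAB: "bA n = ?EG - bB n" "bB n = ?EG - bA n" "ends A (Inr n) = ends B (Inr n)"
    using pr1 pr2 n unfolding PR_def by auto
  have RA: "Rl (edges A) \<subseteq> ?EG" "Rl (edges B) \<subseteq> ?EG"
    using MIself_D(2)[OF mA] MIself_D(2)[OF mB] by (auto simp: real_ok_def Rl_def)
  have r: "Rl (edges A) \<inter> Rl (edges B) = {}"
  proof -
    have "e \<notin> Rl (edges B)" if e: "e \<in> Rl (edges A)" for e
    proof
      assume eB: "e \<in> Rl (edges B)"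
      have "e \<notin> bA n" using MIself_D(4)[OF mA n(1)] e by auto
      then have "e \<in> bB n" using nAB(1) RA e by auto
      then show False using MIself_D(4)[OF mB n(2)] eB by auto
    qed
    then show ?thesis by blast
  qed
  have l: "Lb (edges A) \<inter> Lb (edges B) = {n}"
  proof (rule ccontr)
    assume "Lb (edges A) \<inter> Lb (edges B) \<noteq> {n}"
    then obtain m where m: "m \<in> Lb (edges A)" "m \<in> Lb (edges B)" "m \<noteq> n" using n by blast
    have mAB: "bA m = ?EG - bB m" using pr1 m unfolding PR_def by auto
    have cover: "x \<in> bA n \<or> x \<in> bA m" if "x \<in> ?EG" for x
    proof (rule ccontr)
      assume "\<not> (x \<in> bA n \<or> x \<in> bA m)"
      then have "x \<in> bB n" "x \<in> bB m" using nAB(1) mAB that by auto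
      then show False using MIself_D(5)[OF mB n(2) m(2)] m(3) by auto
    qed
    have R0: "Rl (edges A) = {}"
      using cover RA(1) MIself_D(4)[OF mA n(1)] MIself_D(4)[OF mA m(1)] by blast
    have L2: "Lb (edges A) \<subseteq> {n, m}"
    proof
      fix l assume l: "l \<in> Lb (edges A)"
      show "l \<in> {n, m}"
      proof (rule ccontr)
        assume ln: "l \<notin> {n, m}"
        have "bA l \<subseteq> ?EG" using MIself_b_sub[OF mA l] .
        moreover have "bA l \<inter> bA n = {}" "bA l \<inter> bA m = {}"
          using MIself_D(5)[OF mA l n(1)] MIself_D(5)[OF mA l m(1)] ln by auto
        ultimately have "bA l = {}" using cover by blast
        then have "ends A (Inr l) = {}" using MIself_D(8)[OF mA l] by (simp add: Vx_def)
        moreover have "card (ends A (Inr l)) = 2" using MIself_D(1)[OF mA] l by (auto simp: wf_graph_def Lb_def)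
        ultimately show False by simp
      qed
    qed
    have "edges A \<subseteq> {Inr n, Inr m}"
    proof
      fix g assume g: "g \<in> edges A"
      show "g \<in> {Inr n, Inr m}"
      proof (cases g)
        case (Inl e) then show ?thesis using g R0 by (auto simp: Rl_def)
      next
        case (Inr l) then show ?thesis using g L2 by (auto simp: Lb_def)
      qed
    qed
    then have "card (edges A) \<le> 2" by (rule card_le2)
    then show False using cA by simp
  qed
  show "edges A \<inter> edges B = {Inr n}"
  proof
    show "{Inr n} \<subseteq> edges A \<inter> edges B" using n by (auto simp: Lb_def)
    show "edges A \<inter> edges B \<subseteq> {Inr n}"
    proof
      fix g assume g: "g \<in> edges A \<inter> edges B"
      show "g \<in> {Inr n}"
      proof (cases g)
        case (Inl e) then show ?thesis using g r by (auto simp: Rl_def)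
      next
        case (Inr l) then show ?thesis using g l by (auto simp: Lb_def)
      qed
    qed
  qed
  show "verts A \<inter> verts B \<subseteq> ends A (Inr n)"
  proof
    fix z assume z: "z \<in> verts A \<inter> verts B"
    show "z \<in> ends A (Inr n)"
    proof (rule ccontr)
      assume zn: "z \<notin> ends A (Inr n)"
      have 1: "z \<in> Vx G (?EG - bA n)" using MIself_D(7)[OF mA n(1)] z zn by auto
      have "z \<in> Vx G (?EG - bB n)" using MIself_D(7)[OF mB n(2)] z zn nAB(3) by auto
      moreover have "?EG - bB n = bA n" using nAB(1) by blast
      ultimately have 2: "z \<in> Vx G (bA n)" by simp
      show False using MIself_D(6)[OF mA n(1)] 1 2 zn by blast
    qed
  qed
qed

lemma sideset_cong: "(\<And>m. m \<in> Lb X \<Longrightarrow> b m = b' m) \<Longrightarrow> sideset b X = sideset b' X"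
  unfolding sideset_def by auto

lemma merge_simps:
  "verts (merge_graphs A B n) = verts A \<union> verts B"
  "edges (merge_graphs A B n) = (edges A \<union> edges B) - {Inr n}"
  "ends (merge_graphs A B n) = (\<lambda>e. if e \<in> edges A then ends A e else ends B e)"
  by (simp_all add: merge_graphs_def)

lemma merge_MIself:
  assumes mA: "MIself G A bA" and mB: "MIself G B bB"
    and n: "n \<in> Lb (edges A)" "n \<in> Lb (edges B)" and nAB: "bA n = edges G - bB n" "ends A (Inr n) = ends B (Inr n)"
    and EE: "edges A \<inter> edges B = {Inr n}"
  shows "MIself G (merge_graphs A B n) (\<lambda>m. if Inr m \<in> edges A then bA m else bB m)"
proof -
  let ?M = "merge_graphs A B n" and ?b = "\<lambda>m. if Inr m \<in> edges A then bA m else bB m" and ?EG = "edges G"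
  have bBn: "bB n = ?EG - bA n" using nAB(1) MIself_b_sub[OF mB n(2)] by blast
  have LbM: "Lb (edges ?M) = (Lb (edges A) - {n}) \<union> (Lb (edges B) - {n})"
    and RlM: "Rl (edges ?M) = Rl (edges A) \<union> Rl (edges B)" by (auto simp: merge_simps Lb_def Rl_def)
  have bA': "?b m = bA m" if "m \<in> Lb (edges A)" for m using that by (simp add: Lb_def)
  have bB': "?b m = bB m" "Inr m \<notin> edges A" if "m \<in> Lb (edges B)" "m \<noteq> n" for m
    using that EE by (auto simp: Lb_def)
  have eA': "ends ?M (Inr m) = ends A (Inr m)" if "m \<in> Lb (edges A)" for m using that by (simp add: merge_simps Lb_def)
  have eB': "ends ?M (Inr m) = ends B (Inr m)" if "m \<in> Lb (edges B)" "m \<noteq> n" for m using that bB'(2)[OF that] by (simp add: merge_simps Lb_def)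
  have sA: "sideset bA (edges A - {Inr n}) = bB n"
  proof -
    have "sideset bA (edges A - {Inr n}) = ?EG - sideset bA {Inr n}" using MIself_compl[OF mA, of "{Inr n}"] n(1) by (simp add: Lb_def)
    then show ?thesis using bBn sideset_single by metis
  qed
  have sB: "sideset bB (edges B - {Inr n}) = bA n"
  proof -
    have "sideset bB (edges B - {Inr n}) = ?EG - sideset bB {Inr n}" using MIself_compl[OF mB, of "{Inr n}"] n(2) by (simp add: Lb_def)
    then show ?thesis using nAB(1) sideset_single by metis
  qed
  have disjn: "bA n \<inter> bB n = {}" using bBn by blast
  have Asub: "Rl (edges A) \<subseteq> bB n" "\<And>m. m \<in> Lb (edges A) \<Longrightarrow> m \<noteq> n \<Longrightarrow> bA m \<subseteq> bB n"
    using sA by (auto simp: sideset_def Rl_def Lb_def)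
  have Bsub: "Rl (edges B) \<subseteq> bA n" "\<And>m. m \<in> Lb (edges B) \<Longrightarrow> m \<noteq> n \<Longrightarrow> bB m \<subseteq> bA n"
    using sB by (auto simp: sideset_def Rl_def Lb_def)
  have wfA: "wf_graph A" and wfB: "wf_graph B" using MIself_D(1)[OF mA] MIself_D(1)[OF mB] .
  have c1: "wf_graph ?M" using wfA wfB unfolding wf_graph_def merge_simps by auto
  have c2: "real_ok G ?M" using MIself_D(2)[OF mA] MIself_D(2)[OF mB] unfolding real_ok_def merge_simps by auto
  have c3: "sideset ?b (edges ?M) = ?EG"
  proof -
    have "edges ?M = (edges A - {Inr n}) \<union> (edges B - {Inr n})" by (auto simp: merge_simps)
    then have "sideset ?b (edges ?M) = sideset ?b (edges A - {Inr n}) \<union> sideset ?b (edges B - {Inr n})"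
      by (simp add: sideset_union)
    also have "sideset ?b (edges A - {Inr n}) = sideset bA (edges A - {Inr n})"
      by (rule sideset_cong) (auto simp: Lb_def)
    also have "sideset ?b (edges B - {Inr n}) = sideset bB (edges B - {Inr n})"
      by (rule sideset_cong) (use bB' in \<open>auto simp: Lb_def\<close>)
    finally show ?thesis using sA sB bBn MIself_b_sub[OF mA n(1)] by blast
  qed
  have c4: "\<forall>m\<in>Lb (edges ?M). Rl (edges ?M) \<inter> ?b m = {}"
  proof
    fix m assume m: "m \<in> Lb (edges ?M)"
    show "Rl (edges ?M) \<inter> ?b m = {}"
    proof (cases "m \<in> Lb (edges A)")
      case True
      then have "m \<noteq> n" using m LbM by auto
      then show ?thesis using True RlM bA' MIself_D(4)[OF mA True] Asub(2)[OF True] Bsub(1) disjn by auto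
    next
      case False
      then have mB': "m \<in> Lb (edges B)" "m \<noteq> n" using m LbM by auto
      then show ?thesis using RlM bB'[OF mB'] MIself_D(4)[OF mB mB'(1)] Bsub(2)[OF mB'] Asub(1) disjn by auto
    qed
  qed
  have c5: "\<forall>m\<in>Lb (edges ?M). \<forall>m'\<in>Lb (edges ?M). m \<noteq> m' \<longrightarrow> ?b m \<inter> ?b m' = {}"
  proof (intro ballI impI)
    fix m m' assume mm: "m \<in> Lb (edges ?M)" "m' \<in> Lb (edges ?M)" "m \<noteq> m'"
    have side: "(m \<in> Lb (edges A) \<and> m \<noteq> n) \<or> (m \<in> Lb (edges B) \<and> m \<noteq> n \<and> m \<notin> Lb (edges A))"
      "(m' \<in> Lb (edges A) \<and> m' \<noteq> n) \<or> (m' \<in> Lb (edges B) \<and> m' \<noteq> n \<and> m' \<notin> Lb (edges A))"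
      using mm LbM by auto
    show "?b m \<inter> ?b m' = {}"
      using side
    proof (elim disjE conjE)
      assume "m \<in> Lb (edges A)" "m \<noteq> n" "m' \<in> Lb (edges A)" "m' \<noteq> n"
      then show ?thesis using MIself_D(5)[OF mA, of m m'] mm(3) bA' by auto
    next
      assume h: "m \<in> Lb (edges A)" "m \<noteq> n" "m' \<in> Lb (edges B)" "m' \<noteq> n" "m' \<notin> Lb (edges A)"
      then show ?thesis using bA'[OF h(1)] bB'(1)[OF h(3,4)] Asub(2)[OF h(1,2)] Bsub(2)[OF h(3,4)] disjn by auto
    next
      assume h: "m \<in> Lb (edges B)" "m \<noteq> n" "m \<notin> Lb (edges A)" "m' \<in> Lb (edges A)" "m' \<noteq> n"
      then show ?thesis using bA'[OF h(4)] bB'(1)[OF h(1,2)] Asub(2)[OF h(4,5)] Bsub(2)[OF h(1,2)] disjn by auto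
    next
      assume h: "m \<in> Lb (edges B)" "m \<noteq> n" "m \<notin> Lb (edges A)" "m' \<in> Lb (edges B)" "m' \<noteq> n" "m' \<notin> Lb (edges A)"
      then show ?thesis using MIself_D(5)[OF mB h(1) h(4)] mm(3) bB'(1)[OF h(1,2)] bB'(1)[OF h(4,5)] by auto
    qed
  qed
  have c68: "Vx G (?b m) \<inter> Vx G (?EG - ?b m) \<subseteq> ends ?M (Inr m) \<and> ends ?M (Inr m) \<subseteq> Vx G (?b m)"
    if m: "m \<in> Lb (edges ?M)" for m
  proof (cases "m \<in> Lb (edges A)")
    case True
    then show ?thesis using MIself_D(6,8)[OF mA True] bA'[OF True] eA'[OF True] by simp
  next
    case False
    then have mB': "m \<in> Lb (edges B)" "m \<noteq> n" using m LbM by auto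
    then show ?thesis using MIself_D(6,8)[OF mB mB'(1)] bB'(1)[OF mB'] eB'[OF mB'] by simp
  qed
  have c7: "verts ?M - ends ?M (Inr m) \<subseteq> Vx G (?EG - ?b m)" if m: "m \<in> Lb (edges ?M)" for m
  proof (cases "m \<in> Lb (edges A)")
    case True
    then have mn: "m \<noteq> n" using m LbM by auto
    show ?thesis
    proof
      fix z assume z: "z \<in> verts ?M - ends ?M (Inr m)"
      show "z \<in> Vx G (?EG - ?b m)"
      proof (cases "z \<in> verts A")
        case True
        then show ?thesis using MIself_D(7)[OF mA \<open>m \<in> Lb (edges A)\<close>] z bA'[OF \<open>m \<in> Lb (edges A)\<close>] eA'[OF \<open>m \<in> Lb (edges A)\<close>] by auto
      next
        case False
        then have zB: "z \<in> verts B" using z by (auto simp: merge_simps)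
        have "ends B (Inr n) \<subseteq> verts A" using nAB(2) wfA n(1) by (auto simp: wf_graph_def Lb_def)
        then have "z \<notin> ends B (Inr n)" using False by auto
        then have "z \<in> Vx G (?EG - bB n)" using MIself_D(7)[OF mB n(2)] zB by auto
        moreover have "?EG - bB n \<subseteq> ?EG - bA m"
          using nAB(1) MIself_D(5)[OF mA n(1) True] mn by auto
        ultimately show ?thesis using Vx_mono[of "?EG - bB n" "?EG - bA m" G] bA'[OF True] by auto
      qed
    qed
  next
    case False
    then have mB': "m \<in> Lb (edges B)" "m \<noteq> n" using m LbM by auto
    show ?thesis
    proof
      fix z assume z: "z \<in> verts ?M - ends ?M (Inr m)"
      show "z \<in> Vx G (?EG - ?b m)"
      proof (cases "z \<in> verts B")
        case True
        then show ?thesis using MIself_D(7)[OF mB mB'(1)] z bB'(1)[OF mB'] eB'[OF mB'] by auto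
      next
        case False
        then have zA: "z \<in> verts A" using z by (auto simp: merge_simps)
        have "ends A (Inr n) \<subseteq> verts B" using nAB(2) wfB n(2) by (auto simp: wf_graph_def Lb_def)
        then have "z \<notin> ends A (Inr n)" using False by auto
        then have "z \<in> Vx G (?EG - bA n)" using MIself_D(7)[OF mA n(1)] zA by auto
        moreover have "?EG - bA n \<subseteq> ?EG - bB m"
          using bBn MIself_D(5)[OF mB n(2) mB'(1)] mB'(2) by auto
        ultimately show ?thesis using Vx_mono[of "?EG - bA n" "?EG - bB m" G] bB'(1)[OF mB'] by auto
      qed
    qed
  qed
  show ?thesis unfolding MIself_def using c1 c2 c3 c4 c5 c68 c7 by blast
qed

lemma pair_merge_other:
  assumes "PR G A bA Y bY" "PR G Y bY A bA" "PR G B bB Y bY" "PR G Y bY B bB"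
  shows "PR G (merge_graphs A B n) (\<lambda>m. if Inr m \<in> edges A then bA m else bB m) Y bY \<and>
         PR G Y bY (merge_graphs A B n) (\<lambda>m. if Inr m \<in> edges A then bA m else bB m)"
  using assms unfolding PR_def by (auto simp: merge_simps Lb_def)

lemma cycle_card3:
  assumes "is_cycle H" shows "card (edges H) \<ge> 3"
proof -
  obtain vs es where c: "closed_path H vs es" "set es = edges H" "length es \<ge> 3" using assms by (auto simp: is_cycle_def)
  have "distinct es" using c(1) by (simp add: closed_path_def)
  then have "card (edges H) = length es" using c(2) distinct_card by fastforce
  then show ?thesis using c(3) by simp
qed

lemma cycle_not_multi:
  assumes "is_cycle H" shows "\<not> is_multiedge H"
proof
  assume m: "is_multiedge H"
  obtain vs es where c: "closed_path H vs es" "set vs = verts H" "length es \<ge> 3" using assms by (auto simp: is_cycle_def)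
  note ix = closed_idx[OF c(1)]
  have l: "length vs = Suc (length es)" using c(1) by (simp add: closed_path_def is_walk_def)
  have d: "vs ! 1 \<noteq> vs ! 2" "vs ! 1 \<noteq> vs ! 3" "vs ! 2 \<noteq> vs ! 3"
    using ix(2)[of 1 2] ix(2)[of 1 3] ix(2)[of 2 3] c(3) by auto
  have "vs ! i \<in> verts H" if "i \<le> 3" for i
  proof -
    have "i < length vs" using that l c(3) by linarith
    then show ?thesis using c(2) nth_mem by blast
  qed
  then have inV: "{vs ! 1, vs ! 2, vs ! 3} \<subseteq> verts H" by auto
  have fin: "finite (verts H)" using m by (auto simp: is_multiedge_def intro: card_ge_0_finite)
  have "card {vs ! 1, vs ! 2, vs ! 3} \<le> card (verts H)" using card_mono[OF fin inV] .
  moreover have "card {vs ! 1, vs ! 2, vs ! 3} = 3" using d by auto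
  ultimately show False using m by (simp add: is_multiedge_def)
qed

lemma mergeable_card:
  assumes "mergeable A B n" shows "card (edges A) \<ge> 3" "card (edges B) \<ge> 3"
  using assms cycle_card3 unfolding mergeable_def is_multiedge_def by auto

lemma merge_stepE:
  assumes "merge_step S S'"
  obtains A B n where "A \<in> S" "B \<in> S" "mergeable A B n" "S' = (S - {A, B}) \<union> {merge_graphs A B n}"
  using assms unfolding merge_step_def by blast

lemma MI_merge:
  assumes st: "merge_step S S'" and mi: "MI G S \<beta>"
  shows "\<exists>\<beta>'. MI G S' \<beta>' \<and> (\<forall>A\<in>S. \<forall>B\<in>S. \<forall>n. mergeable A B n \<longrightarrow>
            edges A \<inter> edges B = {Inr n} \<and> verts A \<inter> verts B \<subseteq> ends A (Inr n) \<and> ends A (Inr n) = ends B (Inr n))"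
proof -
  have allp: "\<forall>H1\<in>S. \<forall>H2\<in>S. H1 \<noteq> H2 \<longrightarrow> PR G H1 (\<beta> H1) H2 (\<beta> H2)"
    using mi unfolding MI_alt by (rule conjunct2)
  have prp: "PR G X (\<beta> X) Y (\<beta> Y)" if "X \<in> S" "Y \<in> S" "X \<noteq> Y" for X Y
    using bspec[OF bspec[OF allp that(1)] that(2)] that(3) by (rule mp)
  have slf: "MIself G X (\<beta> X)" if "X \<in> S" for X using mi that by (simp add: MI_def)
  have facts: "edges A \<inter> edges B = {Inr n} \<and> verts A \<inter> verts B \<subseteq> ends A (Inr n) \<and> ends A (Inr n) = ends B (Inr n)"
    if h: "A \<in> S" "B \<in> S" "mergeable A B n" for A B n
  proof -
    have AB: "A \<noteq> B" "n \<in> Lb (edges A)" "n \<in> Lb (edges B)" using h(3) by (auto simp: mergeable_def Lb_def)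
    note pa = MI_pair[OF slf[OF h(1)] slf[OF h(2)] prp[OF h(1,2) AB(1)] prp[OF h(2,1) AB(1)[symmetric]] AB(2,3) mergeable_card(1)[OF h(3)]]
    have "ends A (Inr n) = ends B (Inr n)" using prp[OF h(1,2) AB(1)] AB(2,3) unfolding PR_def by auto
    then show ?thesis using pa by blast
  qed
  obtain A B n where h: "A \<in> S" "B \<in> S" "mergeable A B n" "S' = (S - {A, B}) \<union> {merge_graphs A B n}"
    using merge_stepE[OF st] by blast
  have AB: "A \<noteq> B" "n \<in> Lb (edges A)" "n \<in> Lb (edges B)" using h(3) by (auto simp: mergeable_def Lb_def)
  let ?M = "merge_graphs A B n" and ?bM = "\<lambda>m. if Inr m \<in> edges A then \<beta> A m else \<beta> B m"
  have pAB: "PR G A (\<beta> A) B (\<beta> B)" using prp[OF h(1,2) AB(1)] .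
  have nAB: "\<beta> A n = edges G - \<beta> B n" "ends A (Inr n) = ends B (Inr n)" using pAB AB(2,3) unfolding PR_def by auto
  have EE: "edges A \<inter> edges B = {Inr n}" using facts[OF h(1,2,3)] by blast
  have sM: "MIself G ?M ?bM" using merge_MIself[OF slf[OF h(1)] slf[OF h(2)] AB(2,3) nAB EE] .
  define \<beta>' where "\<beta>' = \<beta>(?M := ?bM)"
  have self: "\<forall>X\<in>S'. MIself G X (\<beta>' X)"
  proof
    fix X assume "X \<in> S'"
    then have "X = ?M \<or> (X \<in> S \<and> X \<noteq> ?M)" using h(4) by blast
    then show "MIself G X (\<beta>' X)" using sM slf by (auto simp: \<beta>'_def)
  qed
  have pairs: "\<forall>X1\<in>S'. \<forall>X2\<in>S'. X1 \<noteq> X2 \<longrightarrow> PR G X1 (\<beta>' X1) X2 (\<beta>' X2)"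
  proof (intro ballI impI)
    fix X1 X2 assume x: "X1 \<in> S'" "X2 \<in> S'" "X1 \<noteq> X2"
    have c: "X = ?M \<or> (X \<in> S \<and> X \<noteq> A \<and> X \<noteq> B \<and> X \<noteq> ?M)" if "X \<in> S'" for X using that h(4) by blast
    have oth: "PR G ?M ?bM Y (\<beta> Y) \<and> PR G Y (\<beta> Y) ?M ?bM" if "Y \<in> S" "Y \<noteq> A" "Y \<noteq> B" for Y
      using pair_merge_other[OF prp[OF h(1) that(1)] prp[OF that(1) h(1)] prp[OF h(2) that(1)] prp[OF that(1) h(2)]] that
      by auto
    from c[OF x(1)] c[OF x(2)] x(3) show "PR G X1 (\<beta>' X1) X2 (\<beta>' X2)"
    proof (elim disjE conjE)
      assume "X1 \<in> S" "X1 \<noteq> A" "X1 \<noteq> B" "X1 \<noteq> ?M" "X2 \<in> S" "X2 \<noteq> A" "X2 \<noteq> B" "X2 \<noteq> ?M"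
      then show ?thesis using prp x(3) by (simp add: \<beta>'_def)
    qed (use oth in \<open>auto simp: \<beta>'_def\<close>)
  qed
  show ?thesis using self pairs facts unfolding MI_alt by blast
qed

lemma MI_init:
  assumes "wf_graph G" shows "MI G {embed_graph G} \<beta>"
proof -
  have "Lb (edges (embed_graph G)) = {}" "Rl (edges (embed_graph G)) = edges G"
    by (auto simp: embed_simps Lb_def Rl_def)
  then have "MIself G (embed_graph G) (\<beta> (embed_graph G))"
    unfolding MIself_def using embed_wf[OF assms] by (auto simp: real_ok_def embed_simps sideset_def)
  then show ?thesis by (simp add: MI_def)
qed

lemma MI_split_reach:
  assumes "split_step\<^sup>*\<^sup>* {embed_graph G} D" "wf_graph G" "biconnected G"
  shows "\<exists>\<beta>. MI G D \<beta>"
  using assms(1)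
proof (induction rule: rtranclp_induct)
  case base then show ?case using MI_init[OF assms(2)] by blast
next
  case (step D D')
  then obtain \<beta> where "MI G D \<beta>" by blast
  then show ?case using MI_split[OF step.hyps(2) SInv_reach[OF step.hyps(1) assms(2,3)]] by blast
qed

lemma merge_fwd:
  assumes "merge_step\<^sup>*\<^sup>* D S" "MI G D \<beta>" "\<exists>P\<in>D. is_cycle P \<and> Inl e \<in> edges P"
  shows "(\<exists>\<beta>. MI G S \<beta>) \<and> (\<exists>K\<in>S. is_cycle K \<and> Inl e \<in> edges K)"
  using assms(1)
proof (induction rule: rtranclp_induct)
  case base then show ?case using assms(2,3) by blast
next
  case (step S S')
  then obtain \<beta>1 K where mi: "MI G S \<beta>1" and K: "K \<in> S" "is_cycle K" "Inl e \<in> edges K" by blast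
  obtain \<beta>' where mi': "MI G S' \<beta>'" and facts: "\<forall>A\<in>S. \<forall>B\<in>S. \<forall>n. mergeable A B n \<longrightarrow>
            edges A \<inter> edges B = {Inr n} \<and> verts A \<inter> verts B \<subseteq> ends A (Inr n) \<and> ends A (Inr n) = ends B (Inr n)"
    using MI_merge[OF step.hyps(2) mi] by blast
  obtain A B n where h: "A \<in> S" "B \<in> S" "mergeable A B n" "S' = (S - {A, B}) \<union> {merge_graphs A B n}"
    using merge_stepE[OF step.hyps(2)] by blast
  show ?case
  proof (cases "K = A \<or> K = B")
    case False then show ?thesis using mi' K h(4) by blast
  next
    case True
    have cyc: "is_cycle A \<and> is_cycle B" using h(3) True K(2) cycle_not_multi unfolding mergeable_def by blast
    have f: "edges A \<inter> edges B = {Inr n}" "verts A \<inter> verts B \<subseteq> ends A (Inr n)" "ends A (Inr n) = ends B (Inr n)"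
      using facts h(1,2,3) by blast+
    have nn: "Inr n \<in> edges A" "Inr n \<in> edges B" using h(3) by (auto simp: mergeable_def)
    have "is_cycle (merge_graphs A B n)" using merge_cycles[OF _ _ nn f] cyc by blast
    moreover have "Inl e \<in> edges (merge_graphs A B n)" using True K(3) by (auto simp: merge_simps)
    ultimately show ?thesis using mi' h(4) by blast
  qed
qed

lemma merge_back:
  assumes "merge_step\<^sup>*\<^sup>* D S"
  shows "\<forall>K\<in>S. is_cycle K \<longrightarrow> Inl e \<in> edges K \<longrightarrow> (\<exists>P\<in>D. is_cycle P \<and> Inl e \<in> edges P)"
  using assms
proof (induction rule: rtranclp_induct)
  case base then show ?case by blast
next
  case (step S S')
  obtain A B n where h: "A \<in> S" "B \<in> S" "mergeable A B n" "S' = (S - {A, B}) \<union> {merge_graphs A B n}"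
    using merge_stepE[OF step.hyps(2)] by blast
  show ?case
  proof (intro ballI impI)
    fix K assume K: "K \<in> S'" "is_cycle K" "Inl e \<in> edges K"
    show "\<exists>P\<in>D. is_cycle P \<and> Inl e \<in> edges P"
    proof (cases "K = merge_graphs A B n")
      case False then show ?thesis using K h(4) step.IH by blast
    next
      case True
      have "\<not> (is_multiedge A \<and> is_multiedge B)" using merge_multi_not_cycle K(2) True by blast
      then have "is_cycle A \<and> is_cycle B" using h(3) by (auto simp: mergeable_def)
      moreover have "Inl e \<in> edges A \<or> Inl e \<in> edges B" using K(3) True by (auto simp: merge_simps)
      ultimately show ?thesis using step.IH h(1,2) by blast
    qed
  qed
qed

lemma reach_replace_edge:
  assumes "reach H E A a b" "ends H e = {x, y}" "reach H (E - {e}) A x y"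
  shows "reach H (E - {e}) A a b"
  using assms(1)
proof (induction rule: reach.induct)
  case (rrefl a) then show ?case by (rule reach.rrefl)
next
  case (rstep a b f c)
  show ?case
  proof (cases "f = e")
    case True
    then have "{b, c} = {x, y}" using rstep.hyps(4) assms(2) by simp
    then have "reach H (E - {e}) A b c" using assms(3) reach_sym[OF assms(3)] by (auto simp: doubleton_eq_iff)
    then show ?thesis using reach_trans rstep.IH by metis
  next
    case False
    show ?thesis by (rule reach.rstep[OF rstep.IH, where f=f]) (use rstep.hyps False in auto)
  qed
qed

lemma del_conn:
  "connected_graph (del_edge_vert G e c) \<longleftrightarrow>
     (\<forall>a\<in>verts G - {c}. \<forall>b\<in>verts G - {c}. reach G (edges G - {e}) (verts G - {c}) a b)"
proof -
  let ?D = "del_edge_vert G e c"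
  have v: "verts ?D = verts G - {c}" and ed: "edges ?D = {f \<in> edges G - {e}. c \<notin> ends G f}" and en: "ends ?D = ends G"
    by (simp_all add: del_edge_vert_def)
  have 1: "reach G (edges G - {e}) (verts G - {c}) a b" if "reach ?D (edges ?D) (verts ?D) a b" for a b
    by (rule reach_transfer[OF that]) (auto simp: v ed en)
  have 2: "reach ?D (edges ?D) (verts ?D) a b" if "reach G (edges G - {e}) (verts G - {c}) a b" for a b
    by (rule reach_transfer[OF that]) (auto simp: v ed en)
  show ?thesis unfolding connected_reach using 1 2 v by auto
qed

theorem corollary3:
  fixes G :: "('v, 'e) mgraph" and C :: "('v, 'e + nat) mgraph set"
  assumes "wf_graph G" and "biconnected G" and "\<not> is_triangle G"
    and "triconnected_components G C"
  shows "two_half_connected G \<longleftrightarrow> \<not> (\<exists>H\<in>C. is_cycle H \<and> (\<exists>e. Inl e \<in> edges H))"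
proof -
  note wf = assms(1) and bc = assms(2) and nt = assms(3)
  obtain D where sD: "split_step\<^sup>*\<^sup>* {embed_graph G} D" and fin: "\<forall>H\<in>D. \<not> (biconnected H \<and> has_sep_pair H)"
    and mD: "merge_step\<^sup>*\<^sup>* D C"
    using assms(4) unfolding triconnected_components_def by blast
  have si: "SInv G D" using SInv_reach[OF sD wf bc] .
  show ?thesis
  proof
    assume th: "two_half_connected G"
    show "\<not> (\<exists>H\<in>C. is_cycle H \<and> (\<exists>e. Inl e \<in> edges H))"
    proof
      assume "\<exists>H\<in>C. is_cycle H \<and> (\<exists>e. Inl e \<in> edges H)"
      then obtain H e where H: "H \<in> C" "is_cycle H" "Inl e \<in> edges H" by blast
      obtain P where P: "P \<in> D" "is_cycle P" "Inl e \<in> edges P" using merge_back[OF mD] H by blast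
      have Pi: "wf_graph P" "verts P \<subseteq> verts G" "real_ok G P" "pb_ok G P" using si P(1) by (auto simp: SInv_def)
      have eG: "e \<in> edges G" "ends P (Inl e) = ends G e" using Pi(3) P(3) by (auto simp: real_ok_def)
      obtain x y where xy: "ends G e = {x, y}" "x \<noteq> y"
        using wf eG(1) by (auto simp: wf_graph_def card_2_iff)
      have xyV: "x \<in> verts G" "y \<in> verts G" using wf eG(1) xy(1) by (auto simp: wf_graph_def)
      obtain c where c: "c \<in> verts P" "c \<notin> {x, y}" "\<not> reach P (edges P - {Inl e}) (verts P - {c}) x y"
      proof -
        have "ends P (Inl e) = {x, y}" using eG(2) xy(1) by simp
        from cycle_bad[OF P(2,3) this] show ?thesis using that by blast
      qed
      have nr: "\<not> reach G (edges G - {e}) (verts G - {c}) x y"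
        using Pi(4) P(3) eG(2) xy(1) c unfolding pb_ok_def by blast
      have cG: "c \<in> verts G" using c(1) Pi(2) by auto
      have "connected_graph (del_edge_vert G e c)" using th nt cG eG(1) unfolding two_half_connected_def by blast
      then show False using nr xyV c(2) unfolding del_conn by auto
    qed
  next
    assume nc: "\<not> (\<exists>H\<in>C. is_cycle H \<and> (\<exists>e. Inl e \<in> edges H))"
    show "two_half_connected G" unfolding two_half_connected_def
    proof (intro conjI bc impI notI)
      assume "\<exists>c\<in>verts G. \<exists>e\<in>edges G. \<not> connected_graph (del_edge_vert G e c)"
      then obtain c e where ce: "c \<in> verts G" "e \<in> edges G" "\<not> connected_graph (del_edge_vert G e c)" by blast
      obtain x y where xy: "ends G e = {x, y}" "x \<noteq> y"
        using wf ce(2) by (auto simp: wf_graph_def card_2_iff)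
      have cxy: "c \<notin> {x, y}"
      proof
        assume cin: "c \<in> {x, y}"
        have "reach G (edges G - {e}) (verts G - {c}) a b" if ab: "a \<in> verts G - {c}" "b \<in> verts G - {c}" for a b
        proof (cases "a = b")
          case True then show ?thesis using ab by (auto intro: rrefl)
        next
          case False
          then have r: "reach G (edges G) (verts G - {c}) a b" using bc ab ce(1) unfolding biconnected_reach by auto
          show ?thesis
            by (rule reach_transfer[OF r]) (use xy cin in \<open>auto simp: doubleton_eq_iff\<close>)
        qed
        then show False using ce(3) unfolding del_conn by blast
      qed
      have nr: "\<not> reach G (edges G - {e}) (verts G - {c}) x y"
      proof
        assume rxy: "reach G (edges G - {e}) (verts G - {c}) x y"
        have "reach G (edges G - {e}) (verts G - {c}) a b" if ab: "a \<in> verts G - {c}" "b \<in> verts G - {c}" for a b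
        proof (cases "a = b")
          case True then show ?thesis using ab by (auto intro: rrefl)
        next
          case False
          then have r: "reach G (edges G) (verts G - {c}) a b" using bc ab ce(1) unfolding biconnected_reach by auto
          show ?thesis using reach_replace_edge[OF r xy(1) rxy] .
        qed
        then show False using ce(3) unfolding del_conn by blast
      qed
      have "Bad e x y {embed_graph G}" unfolding Bad_def
      proof (rule bexI[where x="embed_graph G"], intro conjI)
        show "Inl e \<in> edges (embed_graph G)" using ce(2) by (simp add: embed_simps)
        show "ends (embed_graph G) (Inl e) = {x, y}" using xy(1) by (simp add: embed_simps)
        show "\<exists>c\<in>verts (embed_graph G). c \<notin> {x, y} \<and>
            \<not> reach (embed_graph G) (edges (embed_graph G) - {Inl e}) (verts (embed_graph G) - {c}) x y"
        proof -
          have "\<not> reach (embed_graph G) (edges (embed_graph G) - {Inl e}) (verts (embed_graph G) - {c}) x y"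
          proof
            assume "reach (embed_graph G) (edges (embed_graph G) - {Inl e}) (verts (embed_graph G) - {c}) x y"
            from reach_embed_from[OF this] have "reach G (edges G - {e}) (verts G - {c}) x y"
              by (rule reach_mono) (auto simp: embed_simps)
            then show False using nr by simp
          qed
          moreover have "c \<in> verts (embed_graph G)" using ce(1) by (simp add: embed_simps)
          ultimately show ?thesis using cxy by blast
        qed
      qed simp
      then obtain P c' where P: "P \<in> D" "Inl e \<in> edges P" "ends P (Inl e) = {x, y}" "c' \<in> verts P" "c' \<notin> {x, y}"
        "\<not> reach P (edges P - {Inl e}) (verts P - {c'}) x y"
        using Bad_reach[OF sD wf bc] unfolding Bad_def by blast
      have Pi: "wf_graph P" "biconnected P" using si P(1) by (auto simp: SInv_def)
      have nsp: "\<not> has_sep_pair P" using fin P(1) Pi(2) by blast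
      have "is_cycle P" using bad_triconnected_cycle[OF Pi nsp P(2,3,4,5,6)] .
      moreover obtain \<beta> where "MI G D \<beta>" using MI_split_reach[OF sD wf bc] by blast
      ultimately have "\<exists>K\<in>C. is_cycle K \<and> Inl e \<in> edges K" using merge_fwd[OF mD] P(1,2) by blast
      then show False using nc by blast
    qed
  qed
qed

end
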